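(* Let $A\in\mathbb{R}^{n\times n}$ be monotone, let $A=P_1-R_1+S_1$ be a double weak regular splitting and $A=P_2-R_2+S_2$ a double regular splitting of $A$. Suppose $1\notin\sigma(S_2P_1^{-1})$ and $\widehat{A}^{-1}\geq 0$, where $\widehat{A}=(I-S_2P_1^{-1})A$. If $P_1^{-1}\leq P_2^{-1}$ and $P_1^{-1}R_1\leq P_2^{-1}R_2$, then $\rho(W_{12})\leq\rho(T_1)<1$, where $$W_{12}=\begin{pmatrix} P_2^{-1}R_2-P_2^{-1}S_2P_1^{-1}R_1 & P_2^{-1}S_2P_1^{-1}S_1\\ I & 0\end{pmatrix},\qquad T_1=\begin{pmatrix} P_1^{-1}R_1 & -P_1^{-1}S_1\\ I&0\end{pmatrix}.$$
   Context: Inequalities are entrywise; $\rho$ is the spectral radius, $\sigma$ the spectrum. $A$ is monotone if $A$ is nonsingular and $A^{-1}\geq 0$. A double splitting $A=P-R+S$ with $P$ nonsingular is a double regular splitting if $P^{-1}\geq0$, $R\geq0$, $S\leq0$, and a double weak regular splitting if $P^{-1}\geq 0$, $P^{-1}R\geq0$, $P^{-1}S\leq0$. *)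

theory Defs
  imports "Jordan_Normal_Form.Spectral_Radius"
begin

definition rho :: "real mat \<Rightarrow> real" where
  "rho M = spectral_radius (map_mat complex_of_real M)"

definition is_inv :: "nat \<Rightarrow> real mat \<Rightarrow> real mat \<Rightarrow> bool" where
  "is_inv n M B \<longleftrightarrow> M \<in> carrier_mat n n \<and> B \<in> carrier_mat n n \<and>
     M * B = 1\<^sub>m n \<and> B * M = 1\<^sub>m n"

definition monotone_with_inv :: "nat \<Rightarrow> real mat \<Rightarrow> real mat \<Rightarrow> bool" where
  "monotone_with_inv n A iA \<longleftrightarrow> is_inv n A iA \<and> iA \<ge> 0\<^sub>m n n"

definition double_splitting :: "nat \<Rightarrow> real mat \<Rightarrow> real mat \<Rightarrow> real mat \<Rightarrow> real mat \<Rightarrow> real mat \<Rightarrow> bool" where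
  "double_splitting n A P R S iP \<longleftrightarrow> A \<in> carrier_mat n n \<and> R \<in> carrier_mat n n \<and>
     S \<in> carrier_mat n n \<and> is_inv n P iP \<and> A = P - R + S"

definition double_regular_splitting :: "nat \<Rightarrow> real mat \<Rightarrow> real mat \<Rightarrow> real mat \<Rightarrow> real mat \<Rightarrow> real mat \<Rightarrow> bool" where
  "double_regular_splitting n A P R S iP \<longleftrightarrow> double_splitting n A P R S iP \<and>
     iP \<ge> 0\<^sub>m n n \<and> R \<ge> 0\<^sub>m n n \<and> S \<le> 0\<^sub>m n n"

definition double_weak_regular_splitting :: "nat \<Rightarrow> real mat \<Rightarrow> real mat \<Rightarrow> real mat \<Rightarrow> real mat \<Rightarrow> real mat \<Rightarrow> bool" where
  "double_weak_regular_splitting n A P R S iP \<longleftrightarrow> double_splitting n A P R S iP \<and>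
     iP \<ge> 0\<^sub>m n n \<and> iP * R \<ge> 0\<^sub>m n n \<and> iP * S \<le> 0\<^sub>m n n"

end

theory Submission
  imports Defs
begin

abbreviation cm :: "real mat \<Rightarrow> complex mat" where "cm M \<equiv> map_mat complex_of_real M"

lemma nonneg_matD: "0\<^sub>m n m \<le> (B::real mat) \<Longrightarrow> i < n \<Longrightarrow> j < m \<Longrightarrow> B $$ (i,j) \<ge> 0"
  unfolding less_eq_mat_def by auto

lemma le_matD: "(A::real mat) \<le> B \<Longrightarrow> B \<in> carrier_mat n m \<Longrightarrow> i < n \<Longrightarrow> j < m \<Longrightarrow> A $$ (i,j) \<le> B $$ (i,j)"
  unfolding less_eq_mat_def by auto

lemma mono_mult_vec:
  fixes B :: "real mat"
  assumes B: "B \<in> carrier_mat n m" and B0: "0\<^sub>m n m \<le> B"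
    and x: "x \<in> carrier_vec m" and y: "y \<in> carrier_vec m" and xy: "x \<le> y"
  shows "B *\<^sub>v x \<le> B *\<^sub>v y"
proof -
  have "(B *\<^sub>v x) $ i \<le> (B *\<^sub>v y) $ i" if i: "i < n" for i
  proof -
    have "(B *\<^sub>v x) $ i = (\<Sum>j<m. B $$ (i,j) * x $ j)"
      using B x i by (simp add: scalar_prod_def lessThan_atLeast0)
    also have "\<dots> \<le> (\<Sum>j<m. B $$ (i,j) * y $ j)"
    proof (rule sum_mono)
      fix j assume "j \<in> {..<m}"
      hence j: "j < m" by auto
      have "x $ j \<le> y $ j" using xy y j unfolding less_eq_vec_def by auto
      moreover have "B $$ (i,j) \<ge> 0" using nonneg_matD[OF B0 i j] .
      ultimately show "B $$ (i,j) * x $ j \<le> B $$ (i,j) * y $ j" by (rule mult_left_mono)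
    qed
    also have "\<dots> = (B *\<^sub>v y) $ i"
      using B y i by (simp add: scalar_prod_def lessThan_atLeast0)
    finally show ?thesis .
  qed
  thus ?thesis using B x y unfolding less_eq_vec_def by auto
qed

lemma nonneg_mult_vec:
  fixes B :: "real mat"
  assumes B: "B \<in> carrier_mat n m" and B0: "0\<^sub>m n m \<le> B"
    and x: "x \<in> carrier_vec m" and x0: "0\<^sub>v m \<le> x"
  shows "0\<^sub>v n \<le> B *\<^sub>v x"
proof -
  have "B *\<^sub>v 0\<^sub>v m \<le> B *\<^sub>v x" by (rule mono_mult_vec[OF B B0 _ x x0], auto)
  moreover have "B *\<^sub>v 0\<^sub>v m = 0\<^sub>v n" using B by (intro eq_vecI, auto simp: scalar_prod_def)
  ultimately show ?thesis by simp
qed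

lemma nonneg_mult_mat:
  fixes A B :: "real mat"
  assumes A: "A \<in> carrier_mat n m" and A0: "0\<^sub>m n m \<le> A"
    and B: "B \<in> carrier_mat m k" and B0: "0\<^sub>m m k \<le> B"
  shows "0\<^sub>m n k \<le> A * B"
proof -
  have "(A * B) $$ (i,j) \<ge> 0" if i: "i < n" and j: "j < k" for i j
  proof -
    have "(A * B) $$ (i,j) = (\<Sum>l<m. A $$ (i,l) * B $$ (l,j))"
      using A B i j by (simp add: scalar_prod_def lessThan_atLeast0)
    also have "\<dots> \<ge> 0"
      by (rule sum_nonneg, rule mult_nonneg_nonneg, insert nonneg_matD[OF A0 i] nonneg_matD[OF B0 _ j], auto)
    finally show ?thesis .
  qed
  thus ?thesis using A B unfolding less_eq_mat_def by auto
qed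

lemma nonneg_pow_mat:
  fixes B :: "real mat"
  assumes B: "B \<in> carrier_mat n n" and B0: "0\<^sub>m n n \<le> B"
  shows "0\<^sub>m n n \<le> B ^\<^sub>m k"
proof (induct k)
  case 0 thus ?case using B unfolding less_eq_mat_def by auto
next
  case (Suc k)
  have "B ^\<^sub>m Suc k = B ^\<^sub>m k * B" by simp
  thus ?case using nonneg_mult_mat[OF pow_carrier_mat[OF B] Suc B B0] by simp
qed

lemma rho_max:
  assumes M: "M \<in> carrier_mat N N" and N: "N > 0"
  shows "\<exists>l. eigenvalue (cm M) l \<and> cmod l = rho M"
proof -
  have cM: "cm M \<in> carrier_mat N N" using M by auto
  from spectral_radius_mem_max(1)[OF cM N] show ?thesis
    unfolding rho_def spectrum_def by auto
qed

lemma rho_ge: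
  assumes M: "M \<in> carrier_mat N N" and ev: "eigenvalue (cm M) l"
  shows "cmod l \<le> rho M"
proof -
  have cM: "cm M \<in> carrier_mat N N" using M by auto
  have N: "N > 0" by (rule eigenvalue_imp_nonzero_dim[OF cM ev])
  from spectral_radius_mem_max(2)[OF cM N, of "cmod l"] ev show ?thesis
    unfolding rho_def spectrum_def by auto
qed

lemma rho_nonneg:
  assumes M: "M \<in> carrier_mat N N" and N: "N > 0"
  shows "rho M \<ge> 0"
  using rho_max[OF M N] by (metis norm_ge_zero)

lemma rho_lessI:
  assumes M: "M \<in> carrier_mat N N" and N: "N > 0"
   and ev: "\<And>l. eigenvalue (cm M) l \<Longrightarrow> cmod l < r"
  shows "rho M < r"
  using rho_max[OF M N] ev by force

lemma rho_leI:
  assumes M: "M \<in> carrier_mat N N" and N: "N > 0"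
   and ev: "\<And>l. eigenvalue (cm M) l \<Longrightarrow> cmod l \<le> r"
  shows "rho M \<le> r"
  using rho_max[OF M N] ev by force

lemma smult_pow_mat_index:
  fixes A :: "'a::comm_ring_1 mat"
  assumes A: "A \<in> carrier_mat n n" and i: "i < n" and j: "j < n"
  shows "((a \<cdot>\<^sub>m A) ^\<^sub>m k) $$ (i,j) = a^k * (A ^\<^sub>m k) $$ (i,j)"
  using i j
proof (induct k arbitrary: i j)
  case 0 thus ?case using A by auto
next
  case (Suc k)
  have "((a \<cdot>\<^sub>m A) ^\<^sub>m Suc k) $$ (i,j) = (\<Sum>l<n. ((a \<cdot>\<^sub>m A) ^\<^sub>m k) $$ (i,l) * (a * A $$ (l,j)))"
    using A Suc(2,3) by (simp add: scalar_prod_def lessThan_atLeast0)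
  also have "\<dots> = (\<Sum>l<n. a^(Suc k) * ((A ^\<^sub>m k) $$ (i,l) * A $$ (l,j)))"
    by (rule sum.cong, auto simp: Suc(1)[OF Suc(2)] ac_simps)
  also have "\<dots> = a^(Suc k) * (A ^\<^sub>m Suc k) $$ (i,j)"
    using A Suc(2,3) by (simp add: scalar_prod_def lessThan_atLeast0 sum_distrib_left)
  finally show ?case .
qed

lemma bounded_pow:
  fixes B :: "real mat"
  assumes B: "B \<in> carrier_mat N N" and r: "rho B < r" and N: "N > 0"
  shows "\<exists>C. \<forall>k i j. i < N \<longrightarrow> j < N \<longrightarrow> \<bar>(B ^\<^sub>m k) $$ (i,j)\<bar> \<le> C * r^k"
proof -
  have r0: "r > 0" using rho_nonneg[OF B N] r by auto
  define D where "D = cm ((1/r) \<cdot>\<^sub>m B)"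
  have D: "D \<in> carrier_mat N N" unfolding D_def using B by auto
  have cmB: "cm B = complex_of_real r \<cdot>\<^sub>m D"
    unfolding D_def by (rule eq_matI, insert B r0, auto)
  have "spectral_radius D < 1"
  proof -
    from spectral_radius_mem_max(1)[OF D N] obtain mu where
      mu: "eigenvalue D mu" and eq: "spectral_radius D = cmod mu" unfolding spectrum_def by auto
    from mu obtain v where v: "eigenvector D v mu" unfolding eigenvalue_def by auto
    hence vc: "v \<in> carrier_vec N" "v \<noteq> 0\<^sub>v N" "D *\<^sub>v v = mu \<cdot>\<^sub>v v" using D unfolding eigenvector_def by auto
    have "cm B *\<^sub>v v = (complex_of_real r * mu) \<cdot>\<^sub>v v"
    proof (rule eq_vecI)
      fix i assume "i < dim_vec ((complex_of_real r * mu) \<cdot>\<^sub>v v)"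
      hence i: "i < N" using vc by auto
      have "(cm B *\<^sub>v v) $ i = complex_of_real r * (D *\<^sub>v v) $ i"
        unfolding cmB using D vc(1) i by (simp add: scalar_prod_def sum_distrib_left ac_simps)
      also have "\<dots> = (complex_of_real r * mu) * v $ i" using vc(3) i vc(1) by simp
      finally show "(cm B *\<^sub>v v) $ i = ((complex_of_real r * mu) \<cdot>\<^sub>v v) $ i" using i vc by simp
    qed (insert B vc, auto)
    hence "eigenvalue (cm B) (complex_of_real r * mu)" using vc B unfolding eigenvalue_def eigenvector_def by auto
    from rho_ge[OF B this] r have "cmod (complex_of_real r * mu) < r" by auto
    hence "r * cmod mu < r" using r0 by (simp add: norm_mult)
    hence "cmod mu < 1" using r0 by simp
    thus ?thesis using eq by simp
  qed
  from spectral_radius_jnf_norm_bound_less_1_upper_triangular[OF D this]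
  obtain c where c: "\<And>k. norm_bound (D ^\<^sub>m k) c" by auto
  show ?thesis
  proof (intro exI allI impI)
    fix k i j assume i: "i < N" and j: "j < N"
    have "D ^\<^sub>m k = cm (((1/r) \<cdot>\<^sub>m B) ^\<^sub>m k)" unfolding D_def
      by (rule of_real_hom.mat_hom_pow[symmetric], insert B, auto)
    hence eq: "(D ^\<^sub>m k) $$ (i,j) = complex_of_real ((1/r)^k * (B ^\<^sub>m k) $$ (i,j))"
      using i j B by (simp add: smult_pow_mat_index[OF B i j])
    have bnd: "norm ((D ^\<^sub>m k) $$ (i,j)) \<le> c" using c[of k] i j D unfolding norm_bound_def by auto
    have "\<bar>(1/r)^k * (B ^\<^sub>m k) $$ (i,j)\<bar> \<le> c" using bnd unfolding eq norm_of_real .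
    hence "(1/r)^k * \<bar>(B ^\<^sub>m k) $$ (i,j)\<bar> \<le> c" using r0 by (simp add: abs_mult)
    hence "r^k * ((1/r)^k * \<bar>(B ^\<^sub>m k) $$ (i,j)\<bar>) \<le> r^k * c" using r0 by (intro mult_left_mono, auto)
    thus "\<bar>(B ^\<^sub>m k) $$ (i,j)\<bar> \<le> c * r^k" using r0 by (simp add: power_one_over field_simps)
  qed
qed

lemma smult_le_vec: "0 \<le> (c::real) \<Longrightarrow> v \<le> w \<Longrightarrow> c \<cdot>\<^sub>v v \<le> c \<cdot>\<^sub>v w"
  unfolding less_eq_vec_def by (auto intro: mult_left_mono)

lemma pg:
  fixes B :: "real mat"
  assumes B: "B \<in> carrier_mat N N" and B0: "0\<^sub>m N N \<le> B"
    and x: "x \<in> carrier_vec N" and x0: "0\<^sub>v N \<le> x" and xn: "x \<noteq> 0\<^sub>v N"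
    and s: "s > 0" and Bx: "s \<cdot>\<^sub>v x \<le> B *\<^sub>v x"
  shows "s \<le> rho B"
proof (rule ccontr)
  assume "\<not> s \<le> rho B"
  hence lt: "rho B < s" by auto
  from xn x obtain i0 where i0: "i0 < N" "x $ i0 \<noteq> 0" by (metis eq_vecI carrier_vecD index_zero_vec(1) index_zero_vec(2))
  hence xi0: "x $ i0 > 0" using x0 x unfolding less_eq_vec_def by force
  have N: "N > 0" using i0 by auto
  define r where "r = (rho B + s) / 2"
  have r: "rho B < r" "r < s" "r > 0" using lt rho_nonneg[OF B N] unfolding r_def by auto
  from bounded_pow[OF B r(1) N] obtain C where C: "\<And>k i j. i < N \<Longrightarrow> j < N \<Longrightarrow> \<bar>(B ^\<^sub>m k) $$ (i,j)\<bar> \<le> C * r^k" by auto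
  have pow: "s^k \<cdot>\<^sub>v x \<le> B ^\<^sub>m k *\<^sub>v x" for k
  proof (induct k)
    case 0 thus ?case using x B by auto
  next
    case (Suc k)
    have Bk: "B ^\<^sub>m k \<in> carrier_mat N N" using B by auto
    have Bk0: "0\<^sub>m N N \<le> B ^\<^sub>m k" by (rule nonneg_pow_mat[OF B B0])
    have "s^(Suc k) \<cdot>\<^sub>v x = s \<cdot>\<^sub>v (s^k \<cdot>\<^sub>v x)" by (simp add: smult_smult_assoc)
    also have "\<dots> \<le> s \<cdot>\<^sub>v (B ^\<^sub>m k *\<^sub>v x)" by (rule smult_le_vec, insert s Suc, auto)
    also have "\<dots> = B ^\<^sub>m k *\<^sub>v (s \<cdot>\<^sub>v x)" using Bk x by (simp add: mult_mat_vec)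
    also have "\<dots> \<le> B ^\<^sub>m k *\<^sub>v (B *\<^sub>v x)" by (rule mono_mult_vec[OF Bk Bk0 _ _ Bx], insert B x, auto)
    also have "\<dots> = (B ^\<^sub>m k * B) *\<^sub>v x" by (rule assoc_mult_mat_vec[symmetric, OF Bk B x])
    also have "\<dots> = B ^\<^sub>m Suc k *\<^sub>v x" by simp
    finally show ?case .
  qed
  define X where "X = (\<Sum>j<N. x $ j)"
  have xj0: "j < N \<Longrightarrow> x $ j \<ge> 0" for j using x0 x unfolding less_eq_vec_def by auto
  have bound: "(s/r)^k * x $ i0 \<le> C * X" for k
  proof -
    have "s^k * x $ i0 \<le> (B ^\<^sub>m k *\<^sub>v x) $ i0" using pow[of k] i0 x unfolding less_eq_vec_def by auto
    also have "\<dots> = (\<Sum>j<N. (B ^\<^sub>m k) $$ (i0,j) * x $ j)" using B x i0 by (simp add: scalar_prod_def lessThan_atLeast0)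
    also have "\<dots> \<le> (\<Sum>j<N. (C * r^k) * x $ j)"
    proof (rule sum_mono)
      fix j assume "j \<in> {..<N}" hence j: "j < N" by auto
      have "(B ^\<^sub>m k) $$ (i0,j) \<le> C * r^k" using C[OF i0(1) j, of k] by auto
      thus "(B ^\<^sub>m k) $$ (i0,j) * x $ j \<le> (C * r^k) * x $ j" using xj0[OF j] by (rule mult_right_mono)
    qed
    also have "\<dots> = r^k * (C * X)" unfolding X_def by (simp add: sum_distrib_left ac_simps)
    finally have "s^k * x $ i0 \<le> r^k * (C * X)" .
    hence "s^k * x $ i0 / r^k \<le> C * X" using r(3) by (simp add: divide_le_eq ac_simps)
    thus ?thesis by (simp add: power_divide)
  qed
  have "1 < s / r" using r by simp
  from real_arch_pow[OF this, of "C * X / x $ i0"] obtain k where "C * X / x $ i0 < (s/r)^k" by auto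
  hence "C * X < (s/r)^k * x $ i0" using xi0 by (simp add: divide_less_eq)
  with bound[of k] show False by simp
qed

lemma ns:
  fixes B :: "real mat"
  assumes B: "B \<in> carrier_mat N N" and B0: "0\<^sub>m N N \<le> B" and rho: "rho B < 1" and N: "N > 0"
    and f: "f \<in> carrier_vec N" and f0: "0\<^sub>v N \<le> f"
  shows "\<exists>x \<in> carrier_vec N. x = f + B *\<^sub>v x \<and> 0\<^sub>v N \<le> x"
proof -
  have not1: "\<not> eigenvalue (cm B) 1"
  proof
    assume "eigenvalue (cm B) 1"
    from rho_ge[OF B this] rho show False by simp
  qed
  have cB: "cm B \<in> carrier_mat N N" using B by auto
  have "char_matrix (cm B) 1 = cm (B - 1\<^sub>m N)"
    unfolding char_matrix_def by (rule eq_matI, insert B, auto)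
  with not1 eigenvalue_det[OF cB, of 1] have "det (cm (B - 1\<^sub>m N)) \<noteq> 0" by auto
  hence det1: "det (B - 1\<^sub>m N) \<noteq> 0" by (simp add: of_real_hom.hom_det)
  have "B - 1\<^sub>m N \<in> Units (ring_mat TYPE(real) N undefined)"
    by (rule det_non_zero_imp_unit, insert B det1, auto)
  then obtain Y where Y: "Y \<in> carrier_mat N N" "(B - 1\<^sub>m N) * Y = 1\<^sub>m N"
    unfolding Units_def ring_mat_def by auto
  define x where "x = Y *\<^sub>v (- f)"
  have x: "x \<in> carrier_vec N" unfolding x_def using Y f by auto
  have "(B - 1\<^sub>m N) *\<^sub>v x = - f"
  proof -
    have "(B - 1\<^sub>m N) *\<^sub>v (Y *\<^sub>v (- f)) = ((B - 1\<^sub>m N) * Y) *\<^sub>v (- f)"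
      by (rule assoc_mult_mat_vec[symmetric], insert Y f B, auto)
    also have "\<dots> = - f" using Y(2) f by simp
    finally show ?thesis unfolding x_def .
  qed
  hence eq: "B *\<^sub>v x - x = - f" using B x by (simp add: minus_mult_distrib_mat_vec)
  have xfix: "x = f + B *\<^sub>v x"
  proof (rule eq_vecI)
    fix i assume "i < dim_vec (f + B *\<^sub>v x)"
    hence i: "i < N" using f B by auto
    from arg_cong[OF eq, of "\<lambda>v. v $ i"] i B x f show "x $ i = (f + B *\<^sub>v x) $ i" by auto
  qed (insert f x B, auto)
  have fj0: "j < N \<Longrightarrow> f $ j \<ge> 0" for j using f0 f unfolding less_eq_vec_def by auto
  have expand: "x $ i = (\<Sum>k<K. (B ^\<^sub>m k *\<^sub>v f) $ i) + (B ^\<^sub>m K *\<^sub>v x) $ i" if i: "i < N" for i K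
  proof (induct K)
    case 0 thus ?case using x i B by auto
  next
    case (Suc K)
    have BK: "B ^\<^sub>m K \<in> carrier_mat N N" using B by auto
    have e1: "B ^\<^sub>m K *\<^sub>v (B *\<^sub>v x) = B ^\<^sub>m Suc K *\<^sub>v x"
      using assoc_mult_mat_vec[symmetric, OF BK B x] by simp
    have "B ^\<^sub>m K *\<^sub>v x = B ^\<^sub>m K *\<^sub>v (f + B *\<^sub>v x)" using xfix by simp
    also have "\<dots> = B ^\<^sub>m K *\<^sub>v f + B ^\<^sub>m K *\<^sub>v (B *\<^sub>v x)"
      by (rule mult_add_distrib_mat_vec[OF BK f], insert B x, auto)
    finally have eqv: "B ^\<^sub>m K *\<^sub>v x = B ^\<^sub>m K *\<^sub>v f + B ^\<^sub>m Suc K *\<^sub>v x"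
      unfolding e1 .
    have "(B ^\<^sub>m K *\<^sub>v x) $ i = (B ^\<^sub>m K *\<^sub>v f) $ i + (B ^\<^sub>m Suc K *\<^sub>v x) $ i"
      by (subst eqv, insert i BK B, simp)
    thus ?case using Suc by simp
  qed
  define r where "r = (rho B + 1) / 2"
  have r: "rho B < r" "r < 1" "r > 0" using rho rho_nonneg[OF B N] unfolding r_def by auto
  from bounded_pow[OF B r(1) N] obtain C where C: "\<And>k i j. i < N \<Longrightarrow> j < N \<Longrightarrow> \<bar>(B ^\<^sub>m k) $$ (i,j)\<bar> \<le> C * r^k" by auto
  define Z where "Z = C * (\<Sum>j<N. \<bar>x $ j\<bar>)"
  have C0: "C \<ge> 0" using C[of 0 0 0] N by auto
  have Z0: "Z \<ge> 0" unfolding Z_def using C0 by (auto intro: sum_nonneg)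
  have "0 \<le> x $ i" if i: "i < N" for i
  proof (rule ccontr)
    assume "\<not> 0 \<le> x $ i"
    hence d: "- x $ i > 0" by auto
    have pos: "- x $ i / (Z + 1) > 0" using d Z0 by (intro divide_pos_pos, auto)
    from real_arch_pow_inv[OF pos r(2)] obtain K where K: "r^K < - x $ i / (Z + 1)" by auto
    have BK: "B ^\<^sub>m K \<in> carrier_mat N N" using B by auto
    have "(\<Sum>k<K. (B ^\<^sub>m k *\<^sub>v f) $ i) \<ge> 0"
    proof (rule sum_nonneg)
      fix k
      have "0\<^sub>v N \<le> B ^\<^sub>m k *\<^sub>v f" by (rule nonneg_mult_vec[OF _ nonneg_pow_mat[OF B B0] f f0], insert B, auto)
      thus "(B ^\<^sub>m k *\<^sub>v f) $ i \<ge> 0" using i B unfolding less_eq_vec_def by auto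
    qed
    hence "x $ i \<ge> (B ^\<^sub>m K *\<^sub>v x) $ i" using expand[OF i, of K] by simp
    moreover have "(B ^\<^sub>m K *\<^sub>v x) $ i \<ge> - (r^K * Z)"
    proof -
      have "\<bar>(B ^\<^sub>m K *\<^sub>v x) $ i\<bar> = \<bar>\<Sum>j<N. (B ^\<^sub>m K) $$ (i,j) * x $ j\<bar>"
        using BK B x i by (simp add: scalar_prod_def lessThan_atLeast0)
      also have "\<dots> \<le> (\<Sum>j<N. \<bar>(B ^\<^sub>m K) $$ (i,j) * x $ j\<bar>)" by (rule sum_abs)
      also have "\<dots> \<le> (\<Sum>j<N. (C * r^K) * \<bar>x $ j\<bar>)"
        by (rule sum_mono, unfold abs_mult, rule mult_right_mono, insert C i, auto)
      also have "\<dots> = r^K * Z" unfolding Z_def by (simp add: sum_distrib_left ac_simps)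
      finally show ?thesis by linarith
    qed
    moreover have "r^K * Z < - x $ i"
    proof -
      have "r^K * Z \<le> r^K * (Z + 1)" using r by auto
      also have "\<dots> < - x $ i"
      proof -
        have zp: "Z + 1 > 0" using Z0 by simp
        have "r^K * (Z + 1) < - x $ i" using K pos_less_divide_eq[OF zp, of "r^K" "- x $ i"] by blast
        thus ?thesis by (simp add: mult.commute)
      qed
      finally show ?thesis .
    qed
    ultimately show False by linarith
  qed
  hence "0\<^sub>v N \<le> x" using x unfolding less_eq_vec_def by auto
  with x xfix show ?thesis by auto
qed

abbreviation fb :: "nat \<Rightarrow> 'a::semiring_1 mat \<Rightarrow> 'a mat \<Rightarrow> 'a mat" where
  "fb n H K \<equiv> four_block_mat H K (1\<^sub>m n) (0\<^sub>m n n)"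

lemma smult_append_vec: "l \<cdot>\<^sub>v (a @\<^sub>v b) = (l \<cdot>\<^sub>v a) @\<^sub>v (l \<cdot>\<^sub>v b)"
  by (rule eq_vecI, auto)

lemma cm_fb: assumes H: "H \<in> carrier_mat n n" and K: "K \<in> carrier_mat n n"
  shows "cm (fb n H K) = fb n (cm H) (cm K)"
proof -
  have "cm (fb n H K) = four_block_mat (cm H) (cm K) (cm (1\<^sub>m n)) (cm (0\<^sub>m n n))"
    by (rule map_four_block_mat, insert H K, auto)
  also have "cm (0\<^sub>m n n) = 0\<^sub>m n n" by (rule eq_matI, auto)
  finally show ?thesis by (simp add: of_real_hom.mat_hom_one)
qed

lemma fb_eig:
  fixes H K :: "real mat"
  assumes H: "H \<in> carrier_mat n n" and K: "K \<in> carrier_mat n n"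
    and ev: "eigenvalue (cm (fb n H K)) l"
  shows "\<exists>q \<in> carrier_vec n. q \<noteq> 0\<^sub>v n \<and> (\<forall>i<n. l * (cm H *\<^sub>v q) $ i + (cm K *\<^sub>v q) $ i = l * l * q $ i)"
proof -
  let ?H = "cm H" let ?K = "cm K"
  have cH: "?H \<in> carrier_mat n n" and cK: "?K \<in> carrier_mat n n" using H K by auto
  from ev obtain v where v: "eigenvector (cm (fb n H K)) v l" unfolding eigenvalue_def by auto
  hence vc: "v \<in> carrier_vec (n+n)" "v \<noteq> 0\<^sub>v (n+n)" "cm (fb n H K) *\<^sub>v v = l \<cdot>\<^sub>v v"
    using H K unfolding eigenvector_def by auto
  define p where "p = vec_first v n"
  define q where "q = vec_last v n"
  have p: "p \<in> carrier_vec n" and q: "q \<in> carrier_vec n" unfolding p_def q_def by auto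
  have v: "v = p @\<^sub>v q" unfolding p_def q_def using vc(1) by simp
  have "fb n ?H ?K *\<^sub>v (p @\<^sub>v q) = (?H *\<^sub>v p + ?K *\<^sub>v q) @\<^sub>v (1\<^sub>m n *\<^sub>v p + 0\<^sub>m n n *\<^sub>v q)"
    by (rule four_block_mat_mult_vec[OF cH cK _ _ p q], auto)
  also have "1\<^sub>m n *\<^sub>v p + 0\<^sub>m n n *\<^sub>v q = p" using p q by auto
  finally have "(?H *\<^sub>v p + ?K *\<^sub>v q) @\<^sub>v p = (l \<cdot>\<^sub>v p) @\<^sub>v (l \<cdot>\<^sub>v q)"
    using vc(3) unfolding v cm_fb[OF H K] smult_append_vec by simp
  hence e1: "?H *\<^sub>v p + ?K *\<^sub>v q = l \<cdot>\<^sub>v p" and e2: "p = l \<cdot>\<^sub>v q"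
    by (subst (asm) append_vec_eq[of _ n], insert cH cK p q, auto)+
  show ?thesis
  proof (intro bexI conjI allI impI)
    show "q \<noteq> 0\<^sub>v n"
    proof
      assume "q = 0\<^sub>v n"
      hence "p = 0\<^sub>v n" using e2 by auto
      with \<open>q = 0\<^sub>v n\<close> have "v = 0\<^sub>v (n+n)" unfolding v by (intro eq_vecI, auto)
      with vc(2) show False by auto
    qed
    fix i assume i: "i < n"
    have "(?H *\<^sub>v p) $ i = l * (?H *\<^sub>v q) $ i" unfolding e2 using cH q i by (simp add: mult_mat_vec)
    moreover have "(?H *\<^sub>v p + ?K *\<^sub>v q) $ i = l * p $ i" using e1 i p by simp
    ultimately have "l * (?H *\<^sub>v q) $ i + (?K *\<^sub>v q) $ i = l * p $ i" using i cH cK p q by simp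
    also have "\<dots> = l * l * q $ i" unfolding e2 using i q by simp
    finally show "l * (?H *\<^sub>v q) $ i + (?K *\<^sub>v q) $ i = l * l * q $ i" .
  qed (rule q)
qed

lemma fb_eig_left:
  fixes H K :: "real mat"
  assumes H: "H \<in> carrier_mat n n" and K: "K \<in> carrier_mat n n"
    and ev: "eigenvalue (cm (fb n H K)) l"
  shows "\<exists>a \<in> carrier_vec n. a \<noteq> 0\<^sub>v n \<and> (\<forall>i<n. l * (cm H\<^sup>T *\<^sub>v a) $ i + (cm K\<^sup>T *\<^sub>v a) $ i = l * l * a $ i)"
proof -
  let ?H = "cm H\<^sup>T" let ?K = "cm K\<^sup>T"
  have cH: "?H \<in> carrier_mat n n" and cK: "?K \<in> carrier_mat n n" using H K by auto
  have M: "cm (fb n H K) \<in> carrier_mat (n+n) (n+n)" using H K by auto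
  have MT: "(cm (fb n H K))\<^sup>T \<in> carrier_mat (n+n) (n+n)" using M by auto
  have "eigenvalue (cm (fb n H K))\<^sup>T l"
    using ev unfolding eigenvalue_root_char_poly[OF M] eigenvalue_root_char_poly[OF MT]
      char_poly_transpose_mat[OF M] .
  also have "(cm (fb n H K))\<^sup>T = four_block_mat ?H (1\<^sub>m n) ?K (0\<^sub>m n n)"
    unfolding cm_fb[OF H K]
    by (subst transpose_four_block_mat, insert H K, auto simp: map_mat_transpose)
  finally have ev': "eigenvalue (four_block_mat ?H (1\<^sub>m n) ?K (0\<^sub>m n n)) l" .
  from ev' obtain v where v: "eigenvector (four_block_mat ?H (1\<^sub>m n) ?K (0\<^sub>m n n)) v l" unfolding eigenvalue_def by auto
  hence vc: "v \<in> carrier_vec (n+n)" "v \<noteq> 0\<^sub>v (n+n)" "four_block_mat ?H (1\<^sub>m n) ?K (0\<^sub>m n n) *\<^sub>v v = l \<cdot>\<^sub>v v"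
    using H K unfolding eigenvector_def by auto
  define a where "a = vec_first v n"
  define b where "b = vec_last v n"
  have a: "a \<in> carrier_vec n" and b: "b \<in> carrier_vec n" unfolding a_def b_def by auto
  have v: "v = a @\<^sub>v b" unfolding a_def b_def using vc(1) by simp
  have "four_block_mat ?H (1\<^sub>m n) ?K (0\<^sub>m n n) *\<^sub>v (a @\<^sub>v b) = (?H *\<^sub>v a + 1\<^sub>m n *\<^sub>v b) @\<^sub>v (?K *\<^sub>v a + 0\<^sub>m n n *\<^sub>v b)"
    by (rule four_block_mat_mult_vec[OF cH _ cK _ a b], auto)
  also have "1\<^sub>m n *\<^sub>v b = b" using b by auto
  also have "?K *\<^sub>v a + 0\<^sub>m n n *\<^sub>v b = ?K *\<^sub>v a" using a b cK by auto
  finally have "(?H *\<^sub>v a + b) @\<^sub>v (?K *\<^sub>v a) = (l \<cdot>\<^sub>v a) @\<^sub>v (l \<cdot>\<^sub>v b)"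
    using vc(3) unfolding v smult_append_vec by simp
  hence e1: "?H *\<^sub>v a + b = l \<cdot>\<^sub>v a" and e2: "?K *\<^sub>v a = l \<cdot>\<^sub>v b"
    by (subst (asm) append_vec_eq[of _ n], insert cH cK a b, auto)+
  have e1i: "(?H *\<^sub>v a) $ i + b $ i = l * a $ i" if "i < n" for i
    using arg_cong[OF e1, of "\<lambda>w. w $ i"] that a b cH by simp
  have e2i: "(?K *\<^sub>v a) $ i = l * b $ i" if "i < n" for i
    using arg_cong[OF e2, of "\<lambda>w. w $ i"] that b by simp
  show ?thesis
  proof (intro bexI conjI allI impI)
    show "a \<noteq> 0\<^sub>v n"
    proof
      assume a0: "a = 0\<^sub>v n"
      have "b = 0\<^sub>v n"
      proof (rule eq_vecI)
        fix i assume "i < dim_vec (0\<^sub>v n :: complex vec)"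
        hence i: "i < n" by auto
        have "(?H *\<^sub>v a) $ i = 0" unfolding a0 using cH i by (simp add: scalar_prod_def)
        thus "b $ i = 0\<^sub>v n $ i" using e1i[OF i] a0 i by simp
      qed (insert b, auto)
      with a0 have "v = 0\<^sub>v (n+n)" unfolding v by (intro eq_vecI, auto)
      with vc(2) show False by auto
    qed
    fix i assume i: "i < n"
    have "l * ((?H *\<^sub>v a) $ i + b $ i) = l * (l * a $ i)" using e1i[OF i] by simp
    thus "l * (?H *\<^sub>v a) $ i + (?K *\<^sub>v a) $ i = l * l * a $ i"
      using e2i[OF i] by (simp add: algebra_simps)
  qed (rule a)
qed

lemma abs_ineq:
  fixes H K :: "real mat" and q :: "complex vec"
  assumes H: "H \<in> carrier_mat n n" and K: "K \<in> carrier_mat n n"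
    and H0: "0\<^sub>m n n \<le> H" and K0: "0\<^sub>m n n \<le> K"
    and q: "q \<in> carrier_vec n"
    and eq: "\<And>i. i < n \<Longrightarrow> l * (cm H *\<^sub>v q) $ i + (cm K *\<^sub>v q) $ i = l * l * q $ i"
    and i: "i < n"
  shows "cmod l * cmod l * cmod (q $ i) \<le> cmod l * (H *\<^sub>v vec n (\<lambda>j. cmod (q $ j))) $ i + (K *\<^sub>v vec n (\<lambda>j. cmod (q $ j))) $ i"
proof -
  let ?qa = "vec n (\<lambda>j. cmod (q $ j))"
  have gen: "cmod ((cm M *\<^sub>v q) $ i) \<le> (M *\<^sub>v ?qa) $ i" if M: "M \<in> carrier_mat n n" and M0: "0\<^sub>m n n \<le> M" for M
  proof -
    have "cmod ((cm M *\<^sub>v q) $ i) = cmod (\<Sum>j<n. complex_of_real (M $$ (i,j)) * q $ j)"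
      using M q i by (simp add: scalar_prod_def lessThan_atLeast0 ac_simps)
    also have "\<dots> \<le> (\<Sum>j<n. cmod (complex_of_real (M $$ (i,j)) * q $ j))" by (rule norm_sum)
    also have "\<dots> = (\<Sum>j<n. M $$ (i,j) * cmod (q $ j))"
      by (rule sum.cong, insert nonneg_matD[OF M0 i], auto simp: norm_mult)
    also have "\<dots> = (M *\<^sub>v ?qa) $ i" using M i by (simp add: scalar_prod_def lessThan_atLeast0)
    finally show ?thesis .
  qed
  have "cmod l * cmod l * cmod (q $ i) = cmod (l * (cm H *\<^sub>v q) $ i + (cm K *\<^sub>v q) $ i)"
    unfolding eq[OF i] by (simp add: norm_mult)
  also have "\<dots> \<le> cmod l * cmod ((cm H *\<^sub>v q) $ i) + cmod ((cm K *\<^sub>v q) $ i)"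
    by (rule order_trans[OF norm_triangle_ineq], simp add: norm_mult)
  also have "\<dots> \<le> cmod l * (H *\<^sub>v ?qa) $ i + (K *\<^sub>v ?qa) $ i"
    by (rule add_mono[OF mult_left_mono[OF gen[OF H H0]] gen[OF K K0]], auto)
  finally show ?thesis .
qed

lemma abs_vec_props:
  fixes q :: "complex vec"
  assumes q: "q \<in> carrier_vec n" and qn: "q \<noteq> 0\<^sub>v n"
  shows "vec n (\<lambda>j. cmod (q $ j)) \<in> carrier_vec n" "0\<^sub>v n \<le> vec n (\<lambda>j. cmod (q $ j))"
    "vec n (\<lambda>j. cmod (q $ j)) \<noteq> 0\<^sub>v n"
proof -
  show "vec n (\<lambda>j. cmod (q $ j)) \<in> carrier_vec n" by auto
  show "0\<^sub>v n \<le> vec n (\<lambda>j. cmod (q $ j))" unfolding less_eq_vec_def by auto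
  show "vec n (\<lambda>j. cmod (q $ j)) \<noteq> 0\<^sub>v n"
  proof
    assume "vec n (\<lambda>j. cmod (q $ j)) = 0\<^sub>v n"
    hence "\<And>j. j < n \<Longrightarrow> cmod (q $ j) = 0" by (metis index_vec index_zero_vec(1))
    hence "q = 0\<^sub>v n" using q by (intro eq_vecI, auto)
    with qn show False by auto
  qed
qed

lemma fb_mult:
  assumes H: "H \<in> carrier_mat n n" and K: "K \<in> carrier_mat n n"
    and a: "a \<in> carrier_vec n" and b: "b \<in> carrier_vec n"
  shows "fb n H K *\<^sub>v (a @\<^sub>v b) = (H *\<^sub>v a + K *\<^sub>v b) @\<^sub>v a"
proof -
  have "fb n H K *\<^sub>v (a @\<^sub>v b) = (H *\<^sub>v a + K *\<^sub>v b) @\<^sub>v (1\<^sub>m n *\<^sub>v a + 0\<^sub>m n n *\<^sub>v b)"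
    by (rule four_block_mat_mult_vec[OF H K _ _ a b], auto)
  also have "1\<^sub>m n *\<^sub>v a + 0\<^sub>m n n *\<^sub>v b = a" using a b by auto
  finally show ?thesis .
qed

lemma le_mat_mult_vec:
  fixes M1 M2 :: "real mat"
  assumes M1: "M1 \<in> carrier_mat n m" and M2: "M2 \<in> carrier_mat n m" and le: "M1 \<le> M2"
    and y: "y \<in> carrier_vec m" and y0: "0\<^sub>v m \<le> y"
  shows "M1 *\<^sub>v y \<le> M2 *\<^sub>v y"
proof -
  have "(M1 *\<^sub>v y) $ i \<le> (M2 *\<^sub>v y) $ i" if i: "i < n" for i
  proof -
    have "(M1 *\<^sub>v y) $ i = (\<Sum>j<m. M1 $$ (i,j) * y $ j)" using M1 y i by (simp add: scalar_prod_def lessThan_atLeast0)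
    also have "\<dots> \<le> (\<Sum>j<m. M2 $$ (i,j) * y $ j)"
      by (rule sum_mono, rule mult_right_mono, insert le_matD[OF le M2 i] y0 y, auto simp: less_eq_vec_def)
    also have "\<dots> = (M2 *\<^sub>v y) $ i" using M2 y i by (simp add: scalar_prod_def lessThan_atLeast0)
    finally show ?thesis .
  qed
  thus ?thesis using M1 M2 y unfolding less_eq_vec_def by auto
qed

lemma mult_mat_vec_uminus: "M \<in> carrier_mat n m \<Longrightarrow> v \<in> carrier_vec m \<Longrightarrow> M *\<^sub>v (- v) = - (M *\<^sub>v (v :: 'a :: comm_ring_1 vec))"
  by (intro eq_vecI, auto simp: scalar_prod_def sum_negf[symmetric])

lemma mult_mat_vec_carrier_iff[simp]: "(M *\<^sub>v y \<in> carrier_vec k) = (dim_row M = k)"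
  unfolding carrier_vec_def by auto

lemma mult_mat_carrier_iff[simp]: "(A * B \<in> carrier_mat k m) = (dim_row A = k \<and> dim_col B = m)"
  unfolding carrier_mat_def by auto

lemma vec_le_i: "x \<le> y \<Longrightarrow> y \<in> carrier_vec n \<Longrightarrow> i < n \<Longrightarrow> (x::real vec) $ i \<le> y $ i"
  unfolding less_eq_vec_def by auto

lemma vec_leI: "x \<in> carrier_vec n \<Longrightarrow> y \<in> carrier_vec n \<Longrightarrow> (\<And>i. i < n \<Longrightarrow> (x::real vec) $ i \<le> y $ i) \<Longrightarrow> x \<le> y"
  unfolding less_eq_vec_def by auto

lemma mvi: "M \<in> carrier_mat k m \<Longrightarrow> v \<in> carrier_vec m \<Longrightarrow> i < k \<Longrightarrow> (M *\<^sub>v v) $ i = (\<Sum>j<m. M $$ (i,j) * v $ j)"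
  by (simp add: scalar_prod_def lessThan_atLeast0 ac_simps)

lemma lin_add: "(M :: real mat) \<in> carrier_mat k m \<Longrightarrow> a \<in> carrier_vec m \<Longrightarrow> b \<in> carrier_vec m \<Longrightarrow> i < k \<Longrightarrow>
  (M *\<^sub>v (a + b)) $ i = (M *\<^sub>v a) $ i + (M *\<^sub>v b) $ i"
  using mult_add_distrib_mat_vec[of M k m a b] by simp

lemma lin_sub: "(M :: real mat) \<in> carrier_mat k m \<Longrightarrow> a \<in> carrier_vec m \<Longrightarrow> b \<in> carrier_vec m \<Longrightarrow> i < k \<Longrightarrow>
  (M *\<^sub>v (a - b)) $ i = (M *\<^sub>v a) $ i - (M *\<^sub>v b) $ i"
  using mult_minus_distrib_mat_vec[of M k m a b] by simp

lemma lin_smult: "(M :: real mat) \<in> carrier_mat k m \<Longrightarrow> a \<in> carrier_vec m \<Longrightarrow> i < k \<Longrightarrow>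
  (M *\<^sub>v (c \<cdot>\<^sub>v a)) $ i = c * (M *\<^sub>v a) $ i"
  using mult_mat_vec[of M k m a c] by simp

lemma lin_neg: "(M :: real mat) \<in> carrier_mat k m \<Longrightarrow> a \<in> carrier_vec m \<Longrightarrow> i < k \<Longrightarrow>
  (M *\<^sub>v (- a)) $ i = - (M *\<^sub>v a) $ i"
  using mult_mat_vec_uminus[of M k m a] by simp

locale setting =
  fixes n :: nat and A iA iP1 H1 K1 P2 iP2 R2 S2 :: "real mat"
  assumes n: "n > 0"
  and carr[simp]: "A \<in> carrier_mat n n" "iA \<in> carrier_mat n n" "iP1 \<in> carrier_mat n n"
    "H1 \<in> carrier_mat n n" "K1 \<in> carrier_mat n n" "P2 \<in> carrier_mat n n"
    "iP2 \<in> carrier_mat n n" "R2 \<in> carrier_mat n n" "S2 \<in> carrier_mat n n"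
  and AiA: "A * iA = 1\<^sub>m n" "iA * A = 1\<^sub>m n" and iA0: "0\<^sub>m n n \<le> iA"
  and P2i: "P2 * iP2 = 1\<^sub>m n" "iP2 * P2 = 1\<^sub>m n" and iP20: "0\<^sub>m n n \<le> iP2"
  and A2: "A = P2 - R2 + S2" and R20: "0\<^sub>m n n \<le> R2" and S20: "S2 \<le> 0\<^sub>m n n"
  and GK1: "H1 + K1 = 1\<^sub>m n - iP1 * A" and H10: "0\<^sub>m n n \<le> H1" and K10: "0\<^sub>m n n \<le> K1"
  and iP12: "iP1 \<le> iP2" and H12: "H1 \<le> iP2 * R2"
begin

lemma dims[simp]: "dim_row A = n" "dim_col A = n" "dim_row iA = n" "dim_col iA = n"
  "dim_row iP1 = n" "dim_col iP1 = n" "dim_row H1 = n" "dim_col H1 = n" "dim_row K1 = n" "dim_col K1 = n"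
  "dim_row P2 = n" "dim_col P2 = n" "dim_row iP2 = n" "dim_col iP2 = n" "dim_row R2 = n" "dim_col R2 = n"
  "dim_row S2 = n" "dim_col S2 = n"
  using carrier_matD[OF carr(1)] carrier_matD[OF carr(2)] carrier_matD[OF carr(3)] carrier_matD[OF carr(4)]
   carrier_matD[OF carr(5)] carrier_matD[OF carr(6)] carrier_matD[OF carr(7)] carrier_matD[OF carr(8)]
   carrier_matD[OF carr(9)] by blast+

definition "H2 = iP2 * R2"
definition "K2 = - (iP2 * S2)"

lemma carr2[simp]: "H2 \<in> carrier_mat n n" "K2 \<in> carrier_mat n n"
  "dim_row H2 = n" "dim_col H2 = n" "dim_row K2 = n" "dim_col K2 = n"
  unfolding H2_def K2_def by auto

lemma mS20: "0\<^sub>m n n \<le> - S2"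
  using S20 unfolding less_eq_mat_def by auto

lemma H20: "0\<^sub>m n n \<le> H2"
  unfolding H2_def by (rule nonneg_mult_mat[OF _ iP20 _ R20], auto)

lemma K20: "0\<^sub>m n n \<le> K2"
proof -
  have "0\<^sub>m n n \<le> iP2 * (- S2)" by (rule nonneg_mult_mat[OF _ iP20 _ mS20], auto)
  also have "iP2 * (- S2) = K2" unfolding K2_def by (rule uminus_mult_right_mat, auto)
  finally show ?thesis .
qed

lemma A_vec: "y \<in> carrier_vec n \<Longrightarrow> A *\<^sub>v y = P2 *\<^sub>v y - R2 *\<^sub>v y + S2 *\<^sub>v y"
  unfolding A2 by (subst add_mult_distrib_mat_vec[of "P2 - R2" n n S2 y], auto simp: minus_mult_distrib_mat_vec[of _ n n])

lemma inv_vec: assumes y: "y \<in> carrier_vec n"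
  shows "iA *\<^sub>v (A *\<^sub>v y) = y" "A *\<^sub>v (iA *\<^sub>v y) = y"
    "iP2 *\<^sub>v (P2 *\<^sub>v y) = y" "P2 *\<^sub>v (iP2 *\<^sub>v y) = y"
  using y by (simp_all add: assoc_mult_mat_vec[symmetric, of _ n n _ n] AiA P2i)

lemma H2_vec: "y \<in> carrier_vec n \<Longrightarrow> H2 *\<^sub>v y = iP2 *\<^sub>v (R2 *\<^sub>v y)"
  unfolding H2_def by (simp add: assoc_mult_mat_vec[of _ n n _ n])

lemma K2_vec: "y \<in> carrier_vec n \<Longrightarrow> K2 *\<^sub>v y = - (iP2 *\<^sub>v (S2 *\<^sub>v y))"
  unfolding K2_def by (subst uminus_mult_mat_vec, auto simp: assoc_mult_mat_vec[of _ n n _ n])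

lemma P2H2_vec: "y \<in> carrier_vec n \<Longrightarrow> P2 *\<^sub>v (H2 *\<^sub>v y) = R2 *\<^sub>v y"
  using inv_vec(4)[of "R2 *\<^sub>v y"] by (simp add: H2_vec)

lemma P2K2_vec: "y \<in> carrier_vec n \<Longrightarrow> P2 *\<^sub>v (K2 *\<^sub>v y) = - (S2 *\<^sub>v y)"
  using inv_vec(4)[of "S2 *\<^sub>v y"] by (simp add: K2_vec mult_mat_vec_uminus[of _ n n])

lemma iP2A_vec: assumes y: "y \<in> carrier_vec n" and i: "i < n"
  shows "(iP2 *\<^sub>v (A *\<^sub>v y)) $ i = y $ i - (H2 *\<^sub>v y) $ i - (K2 *\<^sub>v y) $ i"
proof -
  have "(iP2 *\<^sub>v (A *\<^sub>v y)) $ i = (iP2 *\<^sub>v (P2 *\<^sub>v y)) $ i - (iP2 *\<^sub>v (R2 *\<^sub>v y)) $ i + (iP2 *\<^sub>v (S2 *\<^sub>v y)) $ i"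
    unfolding A_vec[OF y] using y i lin_add[of iP2 n n "P2 *\<^sub>v y - R2 *\<^sub>v y" "S2 *\<^sub>v y" i]
       lin_sub[of iP2 n n "P2 *\<^sub>v y" "R2 *\<^sub>v y" i] by simp
  also have "\<dots> = y $ i - (H2 *\<^sub>v y) $ i - (K2 *\<^sub>v y) $ i"
    using y i by (simp add: inv_vec H2_vec K2_vec)
  finally show ?thesis .
qed

lemma iP1A_vec: assumes y: "y \<in> carrier_vec n" and i: "i < n"
  shows "(iP1 *\<^sub>v (A *\<^sub>v y)) $ i = y $ i - (H1 *\<^sub>v y) $ i - (K1 *\<^sub>v y) $ i"
proof -
  have "((H1 + K1) *\<^sub>v y) $ i = ((1\<^sub>m n - iP1 * A) *\<^sub>v y) $ i" unfolding GK1 ..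
  also have "(1\<^sub>m n - iP1 * A) *\<^sub>v y = y - iP1 *\<^sub>v (A *\<^sub>v y)"
    using minus_mult_distrib_mat_vec[of "1\<^sub>m n" n n "iP1 * A" y] assoc_mult_mat_vec[of iP1 n n A n y] y by simp
  also have "(y - iP1 *\<^sub>v (A *\<^sub>v y)) $ i = y $ i - (iP1 *\<^sub>v (A *\<^sub>v y)) $ i" using y i by simp
  finally show ?thesis using y i by (simp add: add_mult_distrib_mat_vec[of _ n n])
qed

lemma S2_nonpos: "y \<in> carrier_vec n \<Longrightarrow> 0\<^sub>v n \<le> y \<Longrightarrow> i < n \<Longrightarrow> (S2 *\<^sub>v y) $ i \<le> 0"
proof -
  assume y: "y \<in> carrier_vec n" and y0: "0\<^sub>v n \<le> y" and i: "i < n"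
  have "0\<^sub>v n \<le> (- S2) *\<^sub>v y" by (rule nonneg_mult_vec[OF _ mS20 y y0], auto)
  hence "0 \<le> ((- S2) *\<^sub>v y) $ i" using i unfolding less_eq_vec_def by auto
  thus ?thesis using y i by (simp add: uminus_mult_mat_vec)
qed

lemma nonneg_i: "(M :: real mat) \<in> carrier_mat n n \<Longrightarrow> 0\<^sub>m n n \<le> M \<Longrightarrow> y \<in> carrier_vec n \<Longrightarrow> 0\<^sub>v n \<le> y \<Longrightarrow> i < n \<Longrightarrow> 0 \<le> (M *\<^sub>v y) $ i"
  using nonneg_mult_vec[of M n n y] unfolding less_eq_vec_def by auto

lemma ip:
  assumes g1: "g1 \<in> carrier_vec n" and g2: "g2 \<in> carrier_vec n"
    and h1: "h1 \<in> carrier_vec n" and h2: "h2 \<in> carrier_vec n"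
    and h10: "0\<^sub>v n \<le> h1" and h20: "0\<^sub>v n \<le> h2"
    and eq1: "\<And>i. i < n \<Longrightarrow> g1 $ i - (H2 *\<^sub>v g1) $ i - (K2 *\<^sub>v g2) $ i = h1 $ i"
    and eq2: "\<And>i. i < n \<Longrightarrow> g2 $ i - g1 $ i = h2 $ i"
  shows "0\<^sub>v n \<le> g1" "0\<^sub>v n \<le> g2"
proof -
  have g2e: "g2 = g1 + h2" by (rule eq_vecI, insert eq2 g1 g2 h2, auto simp: algebra_simps)
  have e1: "iP2 *\<^sub>v (A *\<^sub>v g1) = h1 + K2 *\<^sub>v h2"
  proof (rule eq_vecI)
    fix i assume "i < dim_vec (h1 + K2 *\<^sub>v h2)" hence i: "i < n" using h1 by auto
    have "(K2 *\<^sub>v g2) $ i = (K2 *\<^sub>v g1) $ i + (K2 *\<^sub>v h2) $ i" unfolding g2e using g1 h2 i lin_add[of K2 n n g1 h2 i] by simp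
    thus "(iP2 *\<^sub>v (A *\<^sub>v g1)) $ i = (h1 + K2 *\<^sub>v h2) $ i"
      using iP2A_vec[OF g1 i] eq1[OF i] i h1 h2 by simp
  qed (insert h1, auto)
  have e2: "A *\<^sub>v g1 = P2 *\<^sub>v h1 - S2 *\<^sub>v h2"
  proof -
    have "A *\<^sub>v g1 = P2 *\<^sub>v (iP2 *\<^sub>v (A *\<^sub>v g1))" using inv_vec(4)[of "A *\<^sub>v g1"] by simp
    also have "\<dots> = P2 *\<^sub>v h1 + P2 *\<^sub>v (K2 *\<^sub>v h2)" unfolding e1 using h1 h2 by (simp add: mult_add_distrib_mat_vec[of _ n n])
    also have "\<dots> = P2 *\<^sub>v h1 - S2 *\<^sub>v h2" using h2 h1 by (simp add: P2K2_vec, intro eq_vecI, auto)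
    finally show ?thesis .
  qed
  define c where "c = R2 *\<^sub>v h1 - S2 *\<^sub>v h1 - S2 *\<^sub>v h2"
  have c: "c \<in> carrier_vec n" unfolding c_def by simp
  have c0: "0\<^sub>v n \<le> c"
  proof (rule vec_leI[OF _ c])
    fix i assume i: "i < n"
    have "0 \<le> (R2 *\<^sub>v h1) $ i" by (rule nonneg_i[OF _ R20 h1 h10 i], simp)
    moreover have "(S2 *\<^sub>v h1) $ i \<le> 0" by (rule S2_nonpos[OF h1 h10 i])
    moreover have "(S2 *\<^sub>v h2) $ i \<le> 0" by (rule S2_nonpos[OF h2 h20 i])
    ultimately show "0\<^sub>v n $ i \<le> c $ i" unfolding c_def using i by simp
  qed simp
  have e3: "A *\<^sub>v g1 = A *\<^sub>v h1 + c"
    unfolding e2 c_def A_vec[OF h1] by (rule eq_vecI, insert h1 h2, auto)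
  have g1e: "g1 = h1 + iA *\<^sub>v c"
  proof -
    have "g1 = iA *\<^sub>v (A *\<^sub>v g1)" using inv_vec(1)[OF g1] by simp
    also have "\<dots> = iA *\<^sub>v (A *\<^sub>v h1) + iA *\<^sub>v c" unfolding e3 using h1 c by (simp add: mult_add_distrib_mat_vec[of _ n n])
    also have "\<dots> = h1 + iA *\<^sub>v c" using inv_vec(1)[OF h1] by simp
    finally show ?thesis .
  qed
  have iAc: "0\<^sub>v n \<le> iA *\<^sub>v c" by (rule nonneg_mult_vec[OF _ iA0 c c0], simp)
  show g10: "0\<^sub>v n \<le> g1" unfolding g1e using h10 iAc h1 c unfolding less_eq_vec_def by auto
  show "0\<^sub>v n \<le> g2" unfolding g2e using g10 h20 g1 h2 unfolding less_eq_vec_def by auto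
qed

end

lemma fb_nonneg:
  fixes H K :: "real mat"
  assumes H: "H \<in> carrier_mat n n" and K: "K \<in> carrier_mat n n"
    and H0: "0\<^sub>m n n \<le> H" and K0: "0\<^sub>m n n \<le> K"
  shows "0\<^sub>m (n+n) (n+n) \<le> fb n H K"
proof -
  have "fb n H K $$ (i,j) \<ge> 0" if i: "i < n+n" and j: "j < n+n" for i j
    using i j H K nonneg_matD[OF H0, of i j] nonneg_matD[OF K0, of i "j - n"]
    by (auto simp: index_mat_four_block)
  thus ?thesis using H K unfolding less_eq_mat_def by auto
qed

context setting
begin

lemma vle: "x \<le> y \<Longrightarrow> y \<in> carrier_vec n \<Longrightarrow> i < n \<Longrightarrow> (x::real vec) $ i \<le> y $ i"
  by (rule vec_le_i)

theorem rho_T2_le_T1: "rho (fb n H2 K2) \<le> rho (fb n H1 K1)"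
proof -
  let ?T1 = "fb n H1 K1" and ?T2 = "fb n H2 K2"
  have T1c: "?T1 \<in> carrier_mat (n+n) (n+n)" and T2c: "?T2 \<in> carrier_mat (n+n) (n+n)" by auto
  have nn: "n + n > 0" using n by auto
  obtain l where ev: "eigenvalue (cm ?T2) l" and lm: "cmod l = rho ?T2" using rho_max[OF T2c nn] by auto
  define mu where "mu = rho ?T2"
  show ?thesis
  proof (cases "mu = 0")
    case True thus ?thesis using rho_nonneg[OF T1c nn] unfolding mu_def by simp
  next
    case False
    hence mu: "mu > 0" using rho_nonneg[OF T2c nn] unfolding mu_def by auto
    from fb_eig[OF carr2(1) carr2(2) ev] obtain q where q: "q \<in> carrier_vec n" "q \<noteq> 0\<^sub>v n"
      and qe: "\<And>i. i < n \<Longrightarrow> l * (cm H2 *\<^sub>v q) $ i + (cm K2 *\<^sub>v q) $ i = l * l * q $ i" by auto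
    define x where "x = vec n (\<lambda>j. cmod (q $ j))"
    have x: "x \<in> carrier_vec n" "0\<^sub>v n \<le> x" "x \<noteq> 0\<^sub>v n" using abs_vec_props[OF q] unfolding x_def by auto
    have xi: "mu * mu * x $ i \<le> mu * (H2 *\<^sub>v x) $ i + (K2 *\<^sub>v x) $ i" if i: "i < n" for i
      using abs_ineq[OF carr2(1,2) H20 K20 q(1) qe i] i lm unfolding x_def mu_def by simp
    define u1 where "u1 = mu \<cdot>\<^sub>v x"
    define v1 where "v1 = H2 *\<^sub>v u1 + K2 *\<^sub>v x"
    define z1 where "z1 = H2 *\<^sub>v v1 + K2 *\<^sub>v u1"
    have c[simp]: "u1 \<in> carrier_vec n" "v1 \<in> carrier_vec n" "z1 \<in> carrier_vec n"
      unfolding u1_def v1_def z1_def using x by auto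
    have dc[simp]: "dim_vec u1 = n" "dim_vec v1 = n" "dim_vec z1 = n" "dim_vec x = n"
      using carrier_vecD[OF c(1)] carrier_vecD[OF c(2)] carrier_vecD[OF c(3)] carrier_vecD[OF x(1)] by auto
    have u10: "0\<^sub>v n \<le> u1" unfolding u1_def using x mu unfolding less_eq_vec_def by auto
    have v10: "0\<^sub>v n \<le> v1"
      by (rule vec_leI[OF _ c(2)], insert nonneg_i[OF _ H20 c(1) u10] nonneg_i[OF _ K20 x(1,2)], auto simp: v1_def)
    have a: "mu \<cdot>\<^sub>v u1 \<le> v1"
    proof (rule vec_leI[OF _ c(2)])
      fix i assume i: "i < n"
      have "(H2 *\<^sub>v u1) $ i = mu * (H2 *\<^sub>v x) $ i" unfolding u1_def by (rule lin_smult[OF _ x(1) i], simp)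
      thus "(mu \<cdot>\<^sub>v u1) $ i \<le> v1 $ i" using xi[OF i] i x unfolding v1_def u1_def by (simp add: ac_simps)
    qed simp
    have z10: "0\<^sub>v n \<le> z1"
      by (rule vec_leI[OF _ c(3)], insert nonneg_i[OF _ H20 c(2) v10] nonneg_i[OF _ K20 c(1) u10], auto simp: z1_def)
    have b: "mu \<cdot>\<^sub>v v1 \<le> z1"
    proof (rule vec_leI[OF _ c(3)])
      fix i assume i: "i < n"
      have m1: "H2 *\<^sub>v (mu \<cdot>\<^sub>v u1) \<le> H2 *\<^sub>v v1" by (rule mono_mult_vec[OF _ H20 _ _ a], auto)
      have "(H2 *\<^sub>v (mu \<cdot>\<^sub>v u1)) $ i = mu * (H2 *\<^sub>v u1) $ i" by (rule lin_smult[OF _ c(1) i], simp)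
      moreover have "(K2 *\<^sub>v u1) $ i = mu * (K2 *\<^sub>v x) $ i" unfolding u1_def by (rule lin_smult[OF _ x(1) i], simp)
      ultimately show "(mu \<cdot>\<^sub>v v1) $ i \<le> z1 $ i" using vle[OF m1 _ i] i unfolding v1_def z1_def
        by (simp add: algebra_simps)
    qed simp
    define h1 where "h1 = H2 *\<^sub>v z1 + K2 *\<^sub>v v1 - mu \<cdot>\<^sub>v z1"
    define h2 where "h2 = z1 - mu \<cdot>\<^sub>v v1"
    have ch[simp]: "h1 \<in> carrier_vec n" "h2 \<in> carrier_vec n" unfolding h1_def h2_def by auto
    have dch[simp]: "dim_vec h1 = n" "dim_vec h2 = n" using carrier_vecD[OF ch(1)] carrier_vecD[OF ch(2)] by auto
    have h10: "0\<^sub>v n \<le> h1"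
    proof (rule vec_leI[OF _ ch(1)])
      fix i assume i: "i < n"
      have m1: "H2 *\<^sub>v (mu \<cdot>\<^sub>v v1) \<le> H2 *\<^sub>v z1" by (rule mono_mult_vec[OF _ H20 _ _ b], auto)
      have m2: "K2 *\<^sub>v (mu \<cdot>\<^sub>v u1) \<le> K2 *\<^sub>v v1" by (rule mono_mult_vec[OF _ K20 _ _ a], auto)
      have "(H2 *\<^sub>v (mu \<cdot>\<^sub>v v1)) $ i = mu * (H2 *\<^sub>v v1) $ i" by (rule lin_smult[OF _ c(2) i], simp)
      moreover have "(K2 *\<^sub>v (mu \<cdot>\<^sub>v u1)) $ i = mu * (K2 *\<^sub>v u1) $ i" by (rule lin_smult[OF _ c(1) i], simp)
      ultimately show "0\<^sub>v n $ i \<le> h1 $ i" using vle[OF m1 _ i] vle[OF m2 _ i] i unfolding h1_def z1_def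
        by (simp add: algebra_simps)
    qed simp
    have h20: "0\<^sub>v n \<le> h2"
      by (rule vec_leI[OF _ ch(2)], insert vle[OF b c(3)], auto simp: h2_def)
    define w1 where "w1 = iA *\<^sub>v (P2 *\<^sub>v z1 - S2 *\<^sub>v v1)"
    define w2 where "w2 = w1 + v1"
    have cw[simp]: "w1 \<in> carrier_vec n" "w2 \<in> carrier_vec n" unfolding w1_def w2_def by auto
    have dcw[simp]: "dim_vec w1 = n" "dim_vec w2 = n" using carrier_vecD[OF cw(1)] carrier_vecD[OF cw(2)] by auto
    have Aw1: "A *\<^sub>v w1 = P2 *\<^sub>v z1 - S2 *\<^sub>v v1" unfolding w1_def by (rule inv_vec(2), simp)
    have F1: "w1 $ i - (H2 *\<^sub>v w1) $ i - (K2 *\<^sub>v w2) $ i = z1 $ i" if i: "i < n" for i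
    proof -
      have "(iP2 *\<^sub>v (A *\<^sub>v w1)) $ i = z1 $ i - (iP2 *\<^sub>v (S2 *\<^sub>v v1)) $ i"
        unfolding Aw1 using lin_sub[of iP2 n n "P2 *\<^sub>v z1" "S2 *\<^sub>v v1" i] i inv_vec(3)[OF c(3)] by simp
      moreover have "(K2 *\<^sub>v v1) $ i = - (iP2 *\<^sub>v (S2 *\<^sub>v v1)) $ i" using K2_vec[OF c(2)] i by simp
      moreover have "(K2 *\<^sub>v w2) $ i = (K2 *\<^sub>v w1) $ i + (K2 *\<^sub>v v1) $ i" unfolding w2_def by (rule lin_add, auto simp: i)
      ultimately show ?thesis using iP2A_vec[OF cw(1) i] by simp
    qed
    have F1': "w2 $ i - w1 $ i = v1 $ i" if i: "i < n" for i using i unfolding w2_def by simp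
    have w0: "0\<^sub>v n \<le> w1" "0\<^sub>v n \<le> w2" using ip[OF cw(1,2) c(3,2) z10 v10 F1 F1'] by auto
    define g1 where "g1 = H2 *\<^sub>v w1 + K2 *\<^sub>v w2 - mu \<cdot>\<^sub>v w1"
    define g2 where "g2 = w1 - mu \<cdot>\<^sub>v w2"
    have cg[simp]: "g1 \<in> carrier_vec n" "g2 \<in> carrier_vec n" unfolding g1_def g2_def by auto
    have dcg[simp]: "dim_vec g1 = n" "dim_vec g2 = n" using carrier_vecD[OF cg(1)] carrier_vecD[OF cg(2)] by auto
    have z1e: "z1 = w1 - H2 *\<^sub>v w1 - K2 *\<^sub>v w2" by (rule eq_vecI, insert F1, auto)
    have v1e: "v1 = w2 - w1" by (rule eq_vecI, insert F1', auto)
    have F2a: "g1 $ i - (H2 *\<^sub>v g1) $ i - (K2 *\<^sub>v g2) $ i = h1 $ i" if i: "i < n" for i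
    proof -
      have e1: "(H2 *\<^sub>v g1) $ i = (H2 *\<^sub>v (H2 *\<^sub>v w1)) $ i + (H2 *\<^sub>v (K2 *\<^sub>v w2)) $ i - mu * (H2 *\<^sub>v w1) $ i"
        unfolding g1_def using lin_sub[of H2 n n "H2 *\<^sub>v w1 + K2 *\<^sub>v w2" "mu \<cdot>\<^sub>v w1" i]
          lin_add[of H2 n n "H2 *\<^sub>v w1" "K2 *\<^sub>v w2" i] lin_smult[of H2 n n w1 i mu] i by simp
      have e2: "(K2 *\<^sub>v g2) $ i = (K2 *\<^sub>v w1) $ i - mu * (K2 *\<^sub>v w2) $ i"
        unfolding g2_def using lin_sub[of K2 n n w1 "mu \<cdot>\<^sub>v w2" i] lin_smult[of K2 n n w2 i mu] i by simp
      have e3: "(H2 *\<^sub>v z1) $ i = (H2 *\<^sub>v w1) $ i - (H2 *\<^sub>v (H2 *\<^sub>v w1)) $ i - (H2 *\<^sub>v (K2 *\<^sub>v w2)) $ i"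
        unfolding z1e using lin_sub[of H2 n n "w1 - H2 *\<^sub>v w1" "K2 *\<^sub>v w2" i]
          lin_sub[of H2 n n w1 "H2 *\<^sub>v w1" i] i by simp
      have e4: "(K2 *\<^sub>v v1) $ i = (K2 *\<^sub>v w2) $ i - (K2 *\<^sub>v w1) $ i"
        unfolding v1e using lin_sub[of K2 n n w2 w1 i] i by simp
      have e5: "z1 $ i = w1 $ i - (H2 *\<^sub>v w1) $ i - (K2 *\<^sub>v w2) $ i" using F1[OF i] by simp
      have m5: "mu * z1 $ i = mu * w1 $ i - mu * (H2 *\<^sub>v w1) $ i - mu * (K2 *\<^sub>v w2) $ i"
        unfolding e5 by (simp add: algebra_simps)
      have eg1: "g1 $ i = (H2 *\<^sub>v w1) $ i + (K2 *\<^sub>v w2) $ i - mu * w1 $ i" unfolding g1_def using i by simp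
      have eh1: "h1 $ i = (H2 *\<^sub>v z1) $ i + (K2 *\<^sub>v v1) $ i - mu * z1 $ i" unfolding h1_def using i by simp
      from eg1 eh1 e1 e2 e3 e4 m5 show ?thesis by linarith
    qed
    have F2b: "g2 $ i - g1 $ i = h2 $ i" if i: "i < n" for i
    proof -
      have e5: "z1 $ i = w1 $ i - (H2 *\<^sub>v w1) $ i - (K2 *\<^sub>v w2) $ i" using F1[OF i] by simp
      have e6: "v1 $ i = w2 $ i - w1 $ i" using F1'[OF i] by simp
      have m6: "mu * v1 $ i = mu * w2 $ i - mu * w1 $ i" unfolding e6 by (simp add: algebra_simps)
      have eg1: "g1 $ i = (H2 *\<^sub>v w1) $ i + (K2 *\<^sub>v w2) $ i - mu * w1 $ i" unfolding g1_def using i by simp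
      have eg2: "g2 $ i = w1 $ i - mu * w2 $ i" unfolding g2_def using i by simp
      have eh2: "h2 $ i = z1 $ i - mu * v1 $ i" unfolding h2_def using i by simp
      from eg1 eg2 eh2 e5 m6 show ?thesis by linarith
    qed
    have g0: "0\<^sub>v n \<le> g1" "0\<^sub>v n \<le> g2" using ip[OF cg ch h10 h20 F2a F2b] by auto
    have Aw2: "0\<^sub>v n \<le> A *\<^sub>v w2"
    proof (rule vec_leI)
      fix i assume i: "i < n"
      have "(A *\<^sub>v w2) $ i = (A *\<^sub>v w1) $ i + (A *\<^sub>v v1) $ i" unfolding w2_def by (rule lin_add, auto simp: i)
      also have "(A *\<^sub>v w1) $ i = (P2 *\<^sub>v z1) $ i - (S2 *\<^sub>v v1) $ i" unfolding Aw1 using i by simp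
      also have "(A *\<^sub>v v1) $ i = (P2 *\<^sub>v v1) $ i - (R2 *\<^sub>v v1) $ i + (S2 *\<^sub>v v1) $ i" unfolding A_vec[OF c(2)] using i by simp
      also have "(P2 *\<^sub>v z1) $ i = (R2 *\<^sub>v v1) $ i - (S2 *\<^sub>v u1) $ i"
        unfolding z1_def using lin_add[of P2 n n "H2 *\<^sub>v v1" "K2 *\<^sub>v u1" i] i P2H2_vec[OF c(2)] P2K2_vec[OF c(1)] by simp
      also have "(P2 *\<^sub>v v1) $ i = (R2 *\<^sub>v u1) $ i - (S2 *\<^sub>v x) $ i"
        unfolding v1_def using lin_add[of P2 n n "H2 *\<^sub>v u1" "K2 *\<^sub>v x" i] i P2H2_vec[OF c(1)] P2K2_vec[OF x(1)] by simp
      finally have "(A *\<^sub>v w2) $ i = (R2 *\<^sub>v u1) $ i - (S2 *\<^sub>v u1) $ i - (S2 *\<^sub>v x) $ i" by simp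
      moreover have "0 \<le> (R2 *\<^sub>v u1) $ i" by (rule nonneg_i[OF _ R20 c(1) u10 i], simp)
      moreover have "(S2 *\<^sub>v u1) $ i \<le> 0" by (rule S2_nonpos[OF c(1) u10 i])
      moreover have "(S2 *\<^sub>v x) $ i \<le> 0" by (rule S2_nonpos[OF x(1,2) i])
      ultimately show "0\<^sub>v n $ i \<le> (A *\<^sub>v w2) $ i" using i by simp
    qed auto
    have cmp: "(H2 *\<^sub>v w1) $ i + (K2 *\<^sub>v w2) $ i \<le> (H1 *\<^sub>v w1) $ i + (K1 *\<^sub>v w2) $ i" if i: "i < n" for i
    proof -
      have k1: "(K1 *\<^sub>v w2) $ i = w2 $ i - (H1 *\<^sub>v w2) $ i - (iP1 *\<^sub>v (A *\<^sub>v w2)) $ i" using iP1A_vec[OF cw(2) i] by simp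
      have k2: "(K2 *\<^sub>v w2) $ i = w2 $ i - (H2 *\<^sub>v w2) $ i - (iP2 *\<^sub>v (A *\<^sub>v w2)) $ i" using iP2A_vec[OF cw(2) i] by simp
      have a1: "(H1 *\<^sub>v w2) $ i = (H1 *\<^sub>v w1) $ i + (H1 *\<^sub>v v1) $ i" unfolding w2_def by (rule lin_add, auto simp: i)
      have a2: "(H2 *\<^sub>v w2) $ i = (H2 *\<^sub>v w1) $ i + (H2 *\<^sub>v v1) $ i" unfolding w2_def by (rule lin_add, auto simp: i)
      have m1: "(H1 *\<^sub>v v1) $ i \<le> (H2 *\<^sub>v v1) $ i"
        by (rule vle[OF le_mat_mult_vec[OF carr(4) _ _ c(2) v10]], insert H12 i, auto simp: H2_def)
      have m2: "(iP1 *\<^sub>v (A *\<^sub>v w2)) $ i \<le> (iP2 *\<^sub>v (A *\<^sub>v w2)) $ i"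
        by (rule vle[OF le_mat_mult_vec[OF carr(3) carr(7) iP12 _ Aw2]], insert i, auto)
      show ?thesis using k1 k2 a1 a2 m1 m2 by simp
    qed
    let ?w = "w1 @\<^sub>v w2"
    have cwv: "?w \<in> carrier_vec (n+n)" by auto
    have w00: "0\<^sub>v (n+n) \<le> ?w"
    proof -
      have "0\<^sub>v (n+n) = (0\<^sub>v n :: real vec) @\<^sub>v 0\<^sub>v n" by (rule eq_vecI, auto)
      thus ?thesis using append_vec_le[of "0\<^sub>v n" n w1 "0\<^sub>v n" w2] w0 by auto
    qed
    have wne: "?w \<noteq> 0\<^sub>v (n+n)"
    proof
      assume w: "?w = 0\<^sub>v (n+n)"
      have "w1 = 0\<^sub>v n" "w2 = 0\<^sub>v n"
      proof -
        have "0\<^sub>v (n+n) = (0\<^sub>v n :: real vec) @\<^sub>v 0\<^sub>v n" by (rule eq_vecI, auto)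
        from w[unfolded this] show "w1 = 0\<^sub>v n" "w2 = 0\<^sub>v n" using append_vec_eq[of w1 n "0\<^sub>v n" w2 "0\<^sub>v n"] by auto
      qed
      hence v1z: "v1 = 0\<^sub>v n" unfolding v1e by auto
      from x obtain j where j: "j < n" "x $ j \<noteq> 0" by (metis eq_vecI carrier_vecD index_zero_vec(1) index_zero_vec(2))
      hence "x $ j > 0" using x(2) unfolding less_eq_vec_def by force
      hence "(mu \<cdot>\<^sub>v u1) $ j > 0" unfolding u1_def using j mu by simp
      moreover have "(mu \<cdot>\<^sub>v u1) $ j \<le> v1 $ j" by (rule vle[OF a _ j(1)], simp)
      ultimately show False using v1z j by simp
    qed
    have ineq: "mu \<cdot>\<^sub>v ?w \<le> ?T1 *\<^sub>v ?w"
    proof -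
      have "?T1 *\<^sub>v ?w = (H1 *\<^sub>v w1 + K1 *\<^sub>v w2) @\<^sub>v w1" by (rule fb_mult, auto)
      moreover have "mu \<cdot>\<^sub>v ?w = (mu \<cdot>\<^sub>v w1) @\<^sub>v (mu \<cdot>\<^sub>v w2)" by (rule smult_append_vec)
      moreover have "mu \<cdot>\<^sub>v w1 \<le> H1 *\<^sub>v w1 + K1 *\<^sub>v w2"
      proof (rule vec_leI)
        fix i assume i: "i < n"
        have "0 \<le> g1 $ i" using vle[OF g0(1) cg(1) i] i by simp
        thus "(mu \<cdot>\<^sub>v w1) $ i \<le> (H1 *\<^sub>v w1 + K1 *\<^sub>v w2) $ i" using cmp[OF i] i unfolding g1_def by simp
      qed auto
      moreover have "mu \<cdot>\<^sub>v w2 \<le> w1"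
      proof (rule vec_leI)
        fix i assume i: "i < n"
        have "0 \<le> g2 $ i" using vle[OF g0(2) cg(2) i] i by simp
        thus "(mu \<cdot>\<^sub>v w2) $ i \<le> w1 $ i" using i unfolding g2_def by simp
      qed auto
      ultimately show ?thesis using append_vec_le[of "mu \<cdot>\<^sub>v w1" n "H1 *\<^sub>v w1 + K1 *\<^sub>v w2"] by auto
    qed
    have "mu \<le> rho ?T1" by (rule pg[OF T1c fb_nonneg[OF carr(4,5) H10 K10] cwv w00 wne mu ineq])
    thus ?thesis unfolding mu_def .
  qed
qed

end

lemma abs_single:
  fixes M :: "real mat" and v :: "complex vec"
  assumes M: "M \<in> carrier_mat n n" and M0: "0\<^sub>m n n \<le> M"
    and v: "v \<in> carrier_vec n" and ev: "cm M *\<^sub>v v = l \<cdot>\<^sub>v v" and i: "i < n"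
  shows "cmod l * cmod (v $ i) \<le> (M *\<^sub>v vec n (\<lambda>j. cmod (v $ j))) $ i"
proof -
  have "cmod l * cmod (v $ i) = cmod ((cm M *\<^sub>v v) $ i)" unfolding ev using v i by (simp add: norm_mult)
  also have "\<dots> = cmod (\<Sum>j<n. complex_of_real (M $$ (i,j)) * v $ j)"
    using M v i by (simp add: scalar_prod_def lessThan_atLeast0 ac_simps)
  also have "\<dots> \<le> (\<Sum>j<n. cmod (complex_of_real (M $$ (i,j)) * v $ j))" by (rule norm_sum)
  also have "\<dots> = (\<Sum>j<n. M $$ (i,j) * cmod (v $ j))"
    by (rule sum.cong, insert nonneg_matD[OF M0 i], auto simp: norm_mult)
  also have "\<dots> = (M *\<^sub>v vec n (\<lambda>j. cmod (v $ j))) $ i" using M i by (simp add: scalar_prod_def lessThan_atLeast0)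
  finally show ?thesis .
qed

lemma inv_row_pos:
  fixes iP P :: "real mat"
  assumes iP: "iP \<in> carrier_mat n n" and P: "P \<in> carrier_mat n n" and iP0: "0\<^sub>m n n \<le> iP"
    and inv: "iP * P = 1\<^sub>m n" and i: "i < n"
  shows "(iP *\<^sub>v vec n (\<lambda>_. 1)) $ i > 0"
proof -
  have eq: "(iP *\<^sub>v vec n (\<lambda>_. 1)) $ i = (\<Sum>j<n. iP $$ (i,j))" using iP i by (simp add: scalar_prod_def lessThan_atLeast0)
  have nn: "j < n \<Longrightarrow> iP $$ (i,j) \<ge> 0" for j using nonneg_matD[OF iP0 i] by auto
  have "(\<Sum>j<n. iP $$ (i,j)) \<noteq> 0"
  proof
    assume "(\<Sum>j<n. iP $$ (i,j)) = 0"
    hence z: "\<forall>j\<in>{..<n}. iP $$ (i,j) = 0" using sum_nonneg_eq_0_iff[of "{..<n}" "\<lambda>j. iP $$ (i,j)"] nn by auto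
    have "(iP * P) $$ (i,i) = (\<Sum>j<n. iP $$ (i,j) * P $$ (j,i))" using iP P i by (simp add: scalar_prod_def lessThan_atLeast0)
    also have "\<dots> = 0" using z by auto
    finally show False using inv i by simp
  qed
  moreover have "(\<Sum>j<n. iP $$ (i,j)) \<ge> 0" by (rule sum_nonneg, insert nn, auto)
  ultimately show ?thesis unfolding eq by simp
qed

context setting
begin

definition "Hw = H2 + K2 * H1"
definition "Kw = K2 * K1"

lemma carrw[simp]: "Hw \<in> carrier_mat n n" "Kw \<in> carrier_mat n n"
  "dim_row Hw = n" "dim_col Hw = n" "dim_row Kw = n" "dim_col Kw = n"
  unfolding Hw_def Kw_def by auto

lemma Hw0: "0\<^sub>m n n \<le> Hw"
proof -
  have "0\<^sub>m n n \<le> K2 * H1" by (rule nonneg_mult_mat[OF _ K20 _ H10], auto)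
  thus ?thesis using H20 unfolding Hw_def less_eq_mat_def by (auto intro: add_nonneg_nonneg)
qed

lemma Kw0: "0\<^sub>m n n \<le> Kw" unfolding Kw_def by (rule nonneg_mult_mat[OF _ K20 _ K10], auto)

lemma Hw_vec: "y \<in> carrier_vec n \<Longrightarrow> i < n \<Longrightarrow> (Hw *\<^sub>v y) $ i = (H2 *\<^sub>v y) $ i + (K2 *\<^sub>v (H1 *\<^sub>v y)) $ i"
  unfolding Hw_def using add_mult_distrib_mat_vec[of H2 n n "K2 * H1" y] assoc_mult_mat_vec[of K2 n n H1 n y] by simp

lemma Kw_vec: "y \<in> carrier_vec n \<Longrightarrow> (Kw *\<^sub>v y) = K2 *\<^sub>v (K1 *\<^sub>v y)"
  unfolding Kw_def using assoc_mult_mat_vec[of K2 n n K1 n y] by simp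

end

context setting
begin

theorem rho_W_le_T2:
  assumes lt1: "rho (fb n H2 K2) < 1" and iP10: "0\<^sub>m n n \<le> iP1"
  shows "rho (fb n Hw Kw) \<le> rho (fb n H2 K2)"
proof (rule ccontr)
  let ?T2 = "fb n H2 K2" and ?W = "fb n Hw Kw"
  have T2c: "?T2 \<in> carrier_mat (n+n) (n+n)" and Wc: "?W \<in> carrier_mat (n+n) (n+n)" by auto
  have nn: "n + n > 0" using n by auto
  define r2 where "r2 = rho ?T2"
  define rw where "rw = rho ?W"
  assume "\<not> rho ?W \<le> rho ?T2"
  hence lt: "r2 < rw" unfolding r2_def rw_def by auto
  obtain l where evW: "eigenvalue (cm ?W) l" and lw: "cmod l = rw" using rho_max[OF Wc nn] unfolding rw_def by auto
  define t where "t = (r2 + min rw 1) / 2"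
  have r20: "r2 \<ge> 0" unfolding r2_def by (rule rho_nonneg[OF T2c nn])
  have t: "r2 < t" "t < rw" "t < 1" "t > 0" using lt lt1 r20 unfolding t_def r2_def by auto
  define B where "B = (1 / (t * t)) \<cdot>\<^sub>m (t \<cdot>\<^sub>m H2 + K2)"
  have Bc[simp]: "B \<in> carrier_mat n n" "dim_row B = n" "dim_col B = n" unfolding B_def by auto
  have B0: "0\<^sub>m n n \<le> B"
  proof -
    have "B $$ (i,j) \<ge> 0" if i: "i < n" and j: "j < n" for i j
      using nonneg_matD[OF H20 i j] nonneg_matD[OF K20 i j] t i j unfolding B_def by simp
    thus ?thesis unfolding less_eq_mat_def by auto
  qed
  have Bv: "(B *\<^sub>v y) $ i = (t * (H2 *\<^sub>v y) $ i + (K2 *\<^sub>v y) $ i) / (t * t)" if y: "y \<in> carrier_vec n" and i: "i < n" for y i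
  proof -
    have "(B *\<^sub>v y) $ i = (\<Sum>j<n. B $$ (i,j) * y $ j)" by (rule mvi[OF Bc(1) y i])
    also have "\<dots> = (\<Sum>j<n. (t * (H2 $$ (i,j) * y $ j) + K2 $$ (i,j) * y $ j) / (t * t))"
      by (rule sum.cong, insert i, auto simp: B_def field_simps)
    also have "\<dots> = (t * (\<Sum>j<n. H2 $$ (i,j) * y $ j) + (\<Sum>j<n. K2 $$ (i,j) * y $ j)) / (t * t)"
      by (simp add: sum_divide_distrib[symmetric] sum.distrib sum_distrib_left)
    also have "\<dots> = (t * (H2 *\<^sub>v y) $ i + (K2 *\<^sub>v y) $ i) / (t * t)"
      using mvi[OF carr2(1) y i] mvi[OF carr2(2) y i] by simp
    finally show ?thesis .
  qed
  have rhoB: "rho B < 1"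
  proof (rule rho_lessI[OF Bc(1) n])
    fix m assume evB: "eigenvalue (cm B) m"
    show "cmod m < 1"
    proof (rule ccontr)
      assume m1: "\<not> cmod m < 1"
      from evB obtain v where v: "eigenvector (cm B) v m" unfolding eigenvalue_def by auto
      hence vc: "v \<in> carrier_vec n" "v \<noteq> 0\<^sub>v n" "cm B *\<^sub>v v = m \<cdot>\<^sub>v v" unfolding eigenvector_def by auto
      define xi where "xi = vec n (\<lambda>j. cmod (v $ j))"
      have xi: "xi \<in> carrier_vec n" "0\<^sub>v n \<le> xi" "xi \<noteq> 0\<^sub>v n" using abs_vec_props[OF vc(1,2)] unfolding xi_def by auto
      have ineq: "t * t * xi $ i \<le> t * (H2 *\<^sub>v xi) $ i + (K2 *\<^sub>v xi) $ i" if i: "i < n" for i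
      proof -
        have "cmod m * xi $ i \<le> (B *\<^sub>v xi) $ i" using abs_single[OF Bc(1) B0 vc(1) vc(3) i] i unfolding xi_def by simp
        moreover have "xi $ i \<le> cmod m * xi $ i" using m1 xi(2) i unfolding less_eq_vec_def
          by (metis carrier_vecD index_zero_vec(1) mult_le_cancel_right1 not_le xi(1) order_less_le_trans)
        ultimately have "xi $ i \<le> (t * (H2 *\<^sub>v xi) $ i + (K2 *\<^sub>v xi) $ i) / (t * t)" using Bv[OF xi(1) i] by simp
        thus ?thesis using t by (simp add: le_divide_eq mult.commute)
      qed
      let ?u = "(t \<cdot>\<^sub>v xi) @\<^sub>v xi"
      have uc: "?u \<in> carrier_vec (n+n)" using xi by auto
      have u0: "0\<^sub>v (n+n) \<le> ?u"
      proof -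
        have "0\<^sub>v (n+n) = (0\<^sub>v n :: real vec) @\<^sub>v 0\<^sub>v n" by (rule eq_vecI, auto)
        moreover have "0\<^sub>v n \<le> t \<cdot>\<^sub>v xi" using xi t unfolding less_eq_vec_def by auto
        ultimately show ?thesis using append_vec_le[of "0\<^sub>v n" n "t \<cdot>\<^sub>v xi" "0\<^sub>v n" xi] xi by auto
      qed
      have une: "?u \<noteq> 0\<^sub>v (n+n)"
      proof
        assume "?u = 0\<^sub>v (n+n)"
        moreover have "0\<^sub>v (n+n) = (0\<^sub>v n :: real vec) @\<^sub>v 0\<^sub>v n" by (rule eq_vecI, auto)
        ultimately have "xi = 0\<^sub>v n" using append_vec_eq[of "t \<cdot>\<^sub>v xi" n "0\<^sub>v n" xi "0\<^sub>v n"] xi by auto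
        with xi(3) show False by simp
      qed
      have "t \<cdot>\<^sub>v ?u \<le> ?T2 *\<^sub>v ?u"
      proof -
        have "?T2 *\<^sub>v ?u = (H2 *\<^sub>v (t \<cdot>\<^sub>v xi) + K2 *\<^sub>v xi) @\<^sub>v (t \<cdot>\<^sub>v xi)" by (rule fb_mult, insert xi, auto)
        moreover have "t \<cdot>\<^sub>v ?u = (t \<cdot>\<^sub>v (t \<cdot>\<^sub>v xi)) @\<^sub>v (t \<cdot>\<^sub>v xi)" by (rule smult_append_vec)
        moreover have "t \<cdot>\<^sub>v (t \<cdot>\<^sub>v xi) \<le> H2 *\<^sub>v (t \<cdot>\<^sub>v xi) + K2 *\<^sub>v xi"
        proof (rule vec_leI)
          fix i assume i: "i < n"
          have "(H2 *\<^sub>v (t \<cdot>\<^sub>v xi)) $ i = t * (H2 *\<^sub>v xi) $ i" by (rule lin_smult[OF _ xi(1) i], simp)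
          thus "(t \<cdot>\<^sub>v (t \<cdot>\<^sub>v xi)) $ i \<le> (H2 *\<^sub>v (t \<cdot>\<^sub>v xi) + K2 *\<^sub>v xi) $ i"
            using ineq[OF i] i xi by (simp add: ac_simps)
        qed (insert xi, auto)
        ultimately show ?thesis using append_vec_le[of "t \<cdot>\<^sub>v (t \<cdot>\<^sub>v xi)" n "H2 *\<^sub>v (t \<cdot>\<^sub>v xi) + K2 *\<^sub>v xi"] xi by auto
      qed
      from pg[OF T2c fb_nonneg[OF carr2(1,2) H20 K20] uc u0 une t(4) this]
      have "t \<le> r2" unfolding r2_def .
      with t show False by simp
    qed
  qed
  define f where "f = iP2 *\<^sub>v vec n (\<lambda>_. 1)"
  have fc[simp]: "f \<in> carrier_vec n" "dim_vec f = n" unfolding f_def by auto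
  have fpos: "i < n \<Longrightarrow> f $ i > 0" for i unfolding f_def by (rule inv_row_pos[OF carr(7) carr(6) iP20 P2i(2)])
  have f0: "0\<^sub>v n \<le> f" using fpos unfolding less_eq_vec_def by (auto intro: less_imp_le)
  from ns[OF Bc(1) B0 rhoB n fc(1) f0] obtain x where x: "x \<in> carrier_vec n" "x = f + B *\<^sub>v x" "0\<^sub>v n \<le> x" by auto
  have dx[simp]: "dim_vec x = n" using x(1) by auto
  have xi_eq: "x $ i = f $ i + (B *\<^sub>v x) $ i" if i: "i < n" for i using arg_cong[OF x(2), of "\<lambda>v. v $ i"] i by simp
  have Bx0: "i < n \<Longrightarrow> 0 \<le> (B *\<^sub>v x) $ i" for i using nonneg_i[OF Bc(1) B0 x(1) x(3)] by auto
  have xpos: "i < n \<Longrightarrow> x $ i > 0" for i using xi_eq[of i] fpos[of i] Bx0[of i] by simp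
  have E: "t * t * x $ i - t * (H2 *\<^sub>v x) $ i - (K2 *\<^sub>v x) $ i = t * t * f $ i" if i: "i < n" for i
  proof -
    have "x $ i = f $ i + (t * (H2 *\<^sub>v x) $ i + (K2 *\<^sub>v x) $ i) / (t * t)" using xi_eq[OF i] Bv[OF x(1) i] by simp
    hence "t * t * x $ i = t * t * f $ i + (t * (H2 *\<^sub>v x) $ i + (K2 *\<^sub>v x) $ i)" using t by (simp add: field_simps)
    thus ?thesis by simp
  qed
  have P2x: "t * t * (P2 *\<^sub>v x) $ i - t * (R2 *\<^sub>v x) $ i + (S2 *\<^sub>v x) $ i = t * t" if i: "i < n" for i
  proof -
    define e where "e = (t * t) \<cdot>\<^sub>v x - t \<cdot>\<^sub>v (H2 *\<^sub>v x) - K2 *\<^sub>v x"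
    have ec: "e \<in> carrier_vec n" unfolding e_def using x by auto
    have ee: "e = (t * t) \<cdot>\<^sub>v f" by (rule eq_vecI, insert E, auto simp: e_def)
    have "(P2 *\<^sub>v e) $ i = t * t * (P2 *\<^sub>v x) $ i - t * (P2 *\<^sub>v (H2 *\<^sub>v x)) $ i - (P2 *\<^sub>v (K2 *\<^sub>v x)) $ i"
      unfolding e_def using lin_sub[of P2 n n "(t * t) \<cdot>\<^sub>v x - t \<cdot>\<^sub>v (H2 *\<^sub>v x)" "K2 *\<^sub>v x" i]
        lin_sub[of P2 n n "(t * t) \<cdot>\<^sub>v x" "t \<cdot>\<^sub>v (H2 *\<^sub>v x)" i] lin_smult[of P2 n n x i "t * t"]
        lin_smult[of P2 n n "H2 *\<^sub>v x" i t] i x(1) by simp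
    also have "\<dots> = t * t * (P2 *\<^sub>v x) $ i - t * (R2 *\<^sub>v x) $ i + (S2 *\<^sub>v x) $ i"
      using P2H2_vec[OF x(1)] P2K2_vec[OF x(1)] i by simp
    finally have 1: "(P2 *\<^sub>v e) $ i = t * t * (P2 *\<^sub>v x) $ i - t * (R2 *\<^sub>v x) $ i + (S2 *\<^sub>v x) $ i" .
    have "(P2 *\<^sub>v e) $ i = t * t * (P2 *\<^sub>v f) $ i" unfolding ee using lin_smult[of P2 n n f i "t*t"] i by simp
    also have "P2 *\<^sub>v f = vec n (\<lambda>_. 1)" unfolding f_def by (rule inv_vec(4), simp)
    finally have 2: "(P2 *\<^sub>v e) $ i = t * t" using i by simp
    from 1 2 show ?thesis by simp
  qed
  have Ax0: "0\<^sub>v n \<le> A *\<^sub>v x"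
  proof (rule vec_leI)
    fix i assume i: "i < n"
    have a: "(A *\<^sub>v x) $ i = (P2 *\<^sub>v x) $ i - (R2 *\<^sub>v x) $ i + (S2 *\<^sub>v x) $ i" unfolding A_vec[OF x(1)] using i by simp
    have R: "0 \<le> (R2 *\<^sub>v x) $ i" by (rule nonneg_i[OF _ R20 x(1) x(3) i], simp)
    have S: "(S2 *\<^sub>v x) $ i \<le> 0" by (rule S2_nonpos[OF x(1) x(3) i])
    have "t * t * (A *\<^sub>v x) $ i = t * t + t * (1 - t) * (R2 *\<^sub>v x) $ i + (1 - t * t) * (- (S2 *\<^sub>v x) $ i)"
    proof -
      have "t * t * (A *\<^sub>v x) $ i = t * t * (P2 *\<^sub>v x) $ i - t * t * (R2 *\<^sub>v x) $ i + t * t * (S2 *\<^sub>v x) $ i"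
        unfolding a by (simp add: algebra_simps)
      moreover have "t * (1 - t) * (R2 *\<^sub>v x) $ i = t * (R2 *\<^sub>v x) $ i - t * t * (R2 *\<^sub>v x) $ i" by (simp add: algebra_simps)
      moreover have "(1 - t * t) * (- (S2 *\<^sub>v x) $ i) = t * t * (S2 *\<^sub>v x) $ i - (S2 *\<^sub>v x) $ i" by (simp add: algebra_simps)
      ultimately show ?thesis using P2x[OF i] by linarith
    qed
    also have "\<dots> \<ge> 0" using R S t by (intro add_nonneg_nonneg mult_nonneg_nonneg, auto simp: mult_le_one)
    finally have "0 \<le> t * t * (A *\<^sub>v x) $ i" .
    moreover have "t * t > 0" using t by simp
    ultimately have "0 \<le> (A *\<^sub>v x) $ i" by (metis zero_le_mult_iff not_le)
    thus "0\<^sub>v n $ i \<le> (A *\<^sub>v x) $ i" using i by simp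
  qed auto
  have Mw: "t * (Hw *\<^sub>v x) $ i + (Kw *\<^sub>v x) $ i < t * t * x $ i" if i: "i < n" for i
  proof -
    define y where "y = t \<cdot>\<^sub>v (H1 *\<^sub>v x) + K1 *\<^sub>v x"
    have yc: "y \<in> carrier_vec n" unfolding y_def by auto
    have yx: "y \<le> x"
    proof (rule vec_leI[OF yc x(1)])
      fix j assume j: "j < n"
      have k1: "(K1 *\<^sub>v x) $ j = x $ j - (H1 *\<^sub>v x) $ j - (iP1 *\<^sub>v (A *\<^sub>v x)) $ j" using iP1A_vec[OF x(1) j] by simp
      have h: "0 \<le> (H1 *\<^sub>v x) $ j" by (rule nonneg_i[OF _ H10 x(1) x(3) j], simp)
      have p: "0 \<le> (iP1 *\<^sub>v (A *\<^sub>v x)) $ j" by (rule nonneg_i[OF _ iP10 _ Ax0 j], auto)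
      have "y $ j = t * (H1 *\<^sub>v x) $ j + (K1 *\<^sub>v x) $ j" unfolding y_def using j by simp
      also have "\<dots> = x $ j - (1 - t) * (H1 *\<^sub>v x) $ j - (iP1 *\<^sub>v (A *\<^sub>v x)) $ j" using k1 by (simp add: algebra_simps)
      also have "\<dots> \<le> x $ j"
      proof -
        have "0 \<le> (1 - t) * (H1 *\<^sub>v x) $ j" using h t by simp
        thus ?thesis using p by linarith
      qed
      finally show "y $ j \<le> x $ j" .
    qed
    have m: "(K2 *\<^sub>v y) $ i \<le> (K2 *\<^sub>v x) $ i" by (rule vle[OF mono_mult_vec[OF carr2(2) K20 yc x(1) yx] _ i], simp)
    have "(K2 *\<^sub>v y) $ i = t * (K2 *\<^sub>v (H1 *\<^sub>v x)) $ i + (K2 *\<^sub>v (K1 *\<^sub>v x)) $ i"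
      unfolding y_def using lin_add[of K2 n n "t \<cdot>\<^sub>v (H1 *\<^sub>v x)" "K1 *\<^sub>v x" i] lin_smult[of K2 n n "H1 *\<^sub>v x" i t] i x(1) by simp
    hence "t * (Hw *\<^sub>v x) $ i + (Kw *\<^sub>v x) $ i = t * (H2 *\<^sub>v x) $ i + (K2 *\<^sub>v y) $ i"
      using Hw_vec[OF x(1) i] Kw_vec[OF x(1)] by (simp add: algebra_simps)
    also have "\<dots> \<le> t * (H2 *\<^sub>v x) $ i + (K2 *\<^sub>v x) $ i" using m by simp
    also have "\<dots> = t * t * x $ i - t * t * f $ i" using E[OF i] by simp
    also have "\<dots> < t * t * x $ i" using fpos[OF i] t by simp
    finally show ?thesis .
  qed
  from fb_eig[OF carrw(1) carrw(2) evW] obtain q where q: "q \<in> carrier_vec n" "q \<noteq> 0\<^sub>v n"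
    and qe: "\<And>i. i < n \<Longrightarrow> l * (cm Hw *\<^sub>v q) $ i + (cm Kw *\<^sub>v q) $ i = l * l * q $ i" by auto
  define xi where "xi = vec n (\<lambda>j. cmod (q $ j))"
  have xi: "xi \<in> carrier_vec n" "0\<^sub>v n \<le> xi" "xi \<noteq> 0\<^sub>v n" using abs_vec_props[OF q] unfolding xi_def by auto
  define s where "s = rw"
  have s: "s > 0" "t \<le> s" using t unfolding s_def by auto
  have xii: "s * s * xi $ i \<le> s * (Hw *\<^sub>v xi) $ i + (Kw *\<^sub>v xi) $ i" if i: "i < n" for i
    using abs_ineq[OF carrw(1,2) Hw0 Kw0 q(1) qe i] i lw unfolding xi_def s_def by simp
  define c where "c = Max ((\<lambda>j. xi $ j / x $ j) ` {..<n})"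
  have fin: "finite ((\<lambda>j. xi $ j / x $ j) ` {..<n})" "(\<lambda>j. xi $ j / x $ j) ` {..<n} \<noteq> {}" using n by auto
  have cge: "j < n \<Longrightarrow> xi $ j / x $ j \<le> c" for j unfolding c_def by (rule Max_ge[OF fin(1)], auto)
  obtain i0 where i0: "i0 < n" "c = xi $ i0 / x $ i0" using Max_in[OF fin] unfolding c_def by auto
  have xic: "xi \<le> c \<cdot>\<^sub>v x"
  proof (rule vec_leI[OF xi(1)])
    fix j assume j: "j < n"
    have "xi $ j / x $ j \<le> c" by (rule cge[OF j])
    thus "xi $ j \<le> (c \<cdot>\<^sub>v x) $ j" using xpos[OF j] j by (simp add: divide_le_eq mult.commute)
  qed (insert x(1), auto)
  have cpos: "c > 0"
  proof -
    from xi obtain j where j: "j < n" "xi $ j \<noteq> 0" by (metis eq_vecI carrier_vecD index_zero_vec(1) index_zero_vec(2))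
    hence "xi $ j > 0" using xi(2) unfolding less_eq_vec_def by force
    hence "xi $ j / x $ j > 0" using xpos[OF j(1)] by simp
    with cge[OF j(1)] show ?thesis by simp
  qed
  have xi0: "xi $ i0 = c * x $ i0" using i0 xpos[OF i0(1)] by simp
  define a where "a = (Hw *\<^sub>v x) $ i0"
  define b where "b = (Kw *\<^sub>v x) $ i0"
  have a0: "a \<ge> 0" unfolding a_def by (rule nonneg_i[OF _ Hw0 x(1) x(3) i0(1)], simp)
  have b0: "b \<ge> 0" unfolding b_def by (rule nonneg_i[OF _ Kw0 x(1) x(3) i0(1)], simp)
  have ma: "(Hw *\<^sub>v xi) $ i0 \<le> c * a"
  proof -
    have "(Hw *\<^sub>v xi) $ i0 \<le> (Hw *\<^sub>v (c \<cdot>\<^sub>v x)) $ i0" by (rule vle[OF mono_mult_vec[OF carrw(1) Hw0 xi(1) _ xic] _ i0(1)], insert x(1), auto)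
    also have "\<dots> = c * a" unfolding a_def by (rule lin_smult[OF _ x(1) i0(1)], simp)
    finally show ?thesis .
  qed
  have mb: "(Kw *\<^sub>v xi) $ i0 \<le> c * b"
  proof -
    have "(Kw *\<^sub>v xi) $ i0 \<le> (Kw *\<^sub>v (c \<cdot>\<^sub>v x)) $ i0" by (rule vle[OF mono_mult_vec[OF carrw(2) Kw0 xi(1) _ xic] _ i0(1)], insert x(1), auto)
    also have "\<dots> = c * b" unfolding b_def by (rule lin_smult[OF _ x(1) i0(1)], simp)
    finally show ?thesis .
  qed
  have k0: "t * a + b < t * t * x $ i0" using Mw[OF i0(1)] unfolding a_def b_def .
  have k1: "s * a + b \<le> (s * s / (t * t)) * (t * a + b)"
  proof -
    have "s * a \<le> (s * s / t) * a"
    proof (rule mult_right_mono[OF _ a0])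
      have "s * t \<le> s * s" using s by (intro mult_left_mono, auto)
      thus "s \<le> s * s / t" using t by (simp add: le_divide_eq)
    qed
    moreover have "b \<le> (s * s / (t * t)) * b"
    proof -
      have "t * t \<le> s * s" using s t by (intro mult_mono, auto)
      hence "1 \<le> s * s / (t * t)" using t by (simp add: le_divide_eq)
      thus ?thesis using b0 by (metis mult_le_cancel_right1 not_le order_less_le_trans)
    qed
    moreover have "(s * s / (t * t)) * (t * a + b) = (s * s / t) * a + (s * s / (t * t)) * b"
      using t by (simp add: field_simps)
    ultimately show ?thesis by simp
  qed
  have k2: "(s * s / (t * t)) * (t * a + b) < (s * s / (t * t)) * (t * t * x $ i0)"
    by (rule mult_strict_left_mono[OF k0], insert s t, auto)
  have k3: "(s * s / (t * t)) * (t * t * x $ i0) = s * s * x $ i0" using t by (simp add: field_simps)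
  have k4: "s * a + b < s * s * x $ i0" using k1 k2 k3 by simp
  have "s * s * xi $ i0 \<le> s * (c * a) + c * b"
    using xii[OF i0(1)] ma mb s by (smt (verit) mult_left_mono)
  also have "\<dots> = c * (s * a + b)" by (simp add: algebra_simps)
  also have "\<dots> < c * (s * s * x $ i0)" by (rule mult_strict_left_mono[OF k4 cpos])
  also have "\<dots> = s * s * xi $ i0" unfolding xi0 by (simp add: ac_simps)
  finally show False by simp
qed

end

lemma nonneg_transpose: "0\<^sub>m n n \<le> (M :: real mat) \<Longrightarrow> M \<in> carrier_mat n n \<Longrightarrow> 0\<^sub>m n n \<le> M\<^sup>T"
  unfolding less_eq_mat_def by auto

lemma wr_rho_lt1:
  fixes A iA P iP H K :: "real mat"
  assumes n: "n > 0"
    and c: "A \<in> carrier_mat n n" "iA \<in> carrier_mat n n" "P \<in> carrier_mat n n" "iP \<in> carrier_mat n n"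
      "H \<in> carrier_mat n n" "K \<in> carrier_mat n n"
    and AiA: "A * iA = 1\<^sub>m n" and iA0: "0\<^sub>m n n \<le> iA"
    and iPP: "iP * P = 1\<^sub>m n" and iP0: "0\<^sub>m n n \<le> iP"
    and H0: "0\<^sub>m n n \<le> H" and K0: "0\<^sub>m n n \<le> K"
    and G: "H + K = 1\<^sub>m n - iP * A"
  shows "rho (fb n H K) < 1"
proof -
  have Tc: "fb n H K \<in> carrier_mat (n+n) (n+n)" using c by auto
  have nn: "n + n > 0" using n by auto
  have dims[simp]: "dim_row A = n" "dim_col A = n" "dim_row iA = n" "dim_col iA = n"
    "dim_row P = n" "dim_col P = n" "dim_row iP = n" "dim_col iP = n"
    "dim_row H = n" "dim_col H = n" "dim_row K = n" "dim_col K = n"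
    using carrier_matD[OF c(1)] carrier_matD[OF c(2)] carrier_matD[OF c(3)] carrier_matD[OF c(4)]
      carrier_matD[OF c(5)] carrier_matD[OF c(6)] by auto
  have ct[simp]: "A\<^sup>T \<in> carrier_mat n n" "iA\<^sup>T \<in> carrier_mat n n" "P\<^sup>T \<in> carrier_mat n n" "iP\<^sup>T \<in> carrier_mat n n"
      "H\<^sup>T \<in> carrier_mat n n" "K\<^sup>T \<in> carrier_mat n n" using c by auto
  show ?thesis
  proof (rule rho_lessI[OF Tc nn])
    fix l assume ev: "eigenvalue (cm (fb n H K)) l"
    show "cmod l < 1"
    proof (rule ccontr)
      assume "\<not> cmod l < 1"
      hence s1: "cmod l \<ge> 1" by simp
      from fb_eig_left[OF c(5,6) ev] obtain a where a: "a \<in> carrier_vec n" "a \<noteq> 0\<^sub>v n"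
        and ae: "\<And>i. i < n \<Longrightarrow> l * (cm H\<^sup>T *\<^sub>v a) $ i + (cm K\<^sup>T *\<^sub>v a) $ i = l * l * a $ i" by auto
      define al where "al = vec n (\<lambda>j. cmod (a $ j))"
      have al: "al \<in> carrier_vec n" "0\<^sub>v n \<le> al" "al \<noteq> 0\<^sub>v n" using abs_vec_props[OF a] unfolding al_def by auto
      have dal[simp]: "dim_vec al = n" using al(1) by auto
      define s where "s = cmod l"
      have HT0: "0\<^sub>m n n \<le> H\<^sup>T" by (rule nonneg_transpose[OF H0 c(5)])
      have KT0: "0\<^sub>m n n \<le> K\<^sup>T" by (rule nonneg_transpose[OF K0 c(6)])
      have ineq: "s * s * al $ i \<le> s * (H\<^sup>T *\<^sub>v al) $ i + (K\<^sup>T *\<^sub>v al) $ i" if i: "i < n" for i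
        using abs_ineq[OF ct(5,6) HT0 KT0 a(1) ae i] i unfolding al_def s_def by simp
      have G2: "(H\<^sup>T *\<^sub>v al) $ i + (K\<^sup>T *\<^sub>v al) $ i = al $ i - (A\<^sup>T *\<^sub>v (iP\<^sup>T *\<^sub>v al)) $ i" if i: "i < n" for i
      proof -
        have "(H + K)\<^sup>T = (1\<^sub>m n - iP * A)\<^sup>T" unfolding G ..
        hence "H\<^sup>T + K\<^sup>T = 1\<^sub>m n - A\<^sup>T * iP\<^sup>T"
          using c by (simp add: transpose_add[of _ n n] transpose_minus[of _ n n] transpose_mult[of _ n n])
        hence "(H\<^sup>T + K\<^sup>T) *\<^sub>v al = (1\<^sub>m n - A\<^sup>T * iP\<^sup>T) *\<^sub>v al" by simp
        hence "H\<^sup>T *\<^sub>v al + K\<^sup>T *\<^sub>v al = al - A\<^sup>T *\<^sub>v (iP\<^sup>T *\<^sub>v al)"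
          using add_mult_distrib_mat_vec[of "H\<^sup>T" n n "K\<^sup>T" al] minus_mult_distrib_mat_vec[of "1\<^sub>m n" n n "A\<^sup>T * iP\<^sup>T" al]
            assoc_mult_mat_vec[of "A\<^sup>T" n n "iP\<^sup>T" n al] al(1) c by simp
        from arg_cong[OF this, of "\<lambda>v. v $ i"] i c show ?thesis by simp
      qed
      define cc where "cc = iP\<^sup>T *\<^sub>v al"
      have ccc: "cc \<in> carrier_vec n" unfolding cc_def by simp
      have cc0: "0\<^sub>v n \<le> cc" unfolding cc_def by (rule nonneg_mult_vec[OF ct(4) nonneg_transpose[OF iP0 c(4)] al(1,2)])
      have Acc: "(A\<^sup>T *\<^sub>v cc) $ i \<le> 0" if i: "i < n" for i
      proof -
        have h: "0 \<le> (H\<^sup>T *\<^sub>v al) $ i" "0 \<le> (K\<^sup>T *\<^sub>v al) $ i" "0 \<le> al $ i"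
          using nonneg_mult_vec[OF ct(5) HT0 al(1,2)] nonneg_mult_vec[OF ct(6) KT0 al(1,2)] al(2) i
          unfolding less_eq_vec_def by auto
        have "s * s * al $ i \<le> s * ((H\<^sup>T *\<^sub>v al) $ i + (K\<^sup>T *\<^sub>v al) $ i)"
        proof -
          have "(K\<^sup>T *\<^sub>v al) $ i \<le> s * (K\<^sup>T *\<^sub>v al) $ i" using h(2) s1 unfolding s_def
            by (metis mult_le_cancel_right1 not_le order_less_le_trans)
          thus ?thesis using ineq[OF i] by (simp add: algebra_simps)
        qed
        hence "s * (s * al $ i) \<le> s * ((H\<^sup>T *\<^sub>v al) $ i + (K\<^sup>T *\<^sub>v al) $ i)" by (simp add: mult.assoc)
        hence "s * al $ i \<le> (H\<^sup>T *\<^sub>v al) $ i + (K\<^sup>T *\<^sub>v al) $ i" using s1 unfolding s_def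
          by (subst (asm) mult_le_cancel_left_pos, auto)
        moreover have "al $ i \<le> s * al $ i" using h(3) s1 unfolding s_def
          by (metis mult_le_cancel_right1 not_le order_less_le_trans)
        ultimately have "al $ i \<le> (H\<^sup>T *\<^sub>v al) $ i + (K\<^sup>T *\<^sub>v al) $ i" by simp
        thus ?thesis using G2[OF i] unfolding cc_def by simp
      qed
      have inv1: "iA\<^sup>T * A\<^sup>T = 1\<^sub>m n"
        using arg_cong[OF AiA, of transpose_mat] c by (simp add: transpose_mult[of _ n n])
      have inv2: "P\<^sup>T * iP\<^sup>T = 1\<^sub>m n"
        using arg_cong[OF iPP, of transpose_mat] c by (simp add: transpose_mult[of _ n n])
      have ccz: "cc = 0\<^sub>v n"
      proof -
        have "0\<^sub>v n \<le> - (A\<^sup>T *\<^sub>v cc)" using Acc unfolding less_eq_vec_def by auto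
        from nonneg_mult_vec[OF ct(2) nonneg_transpose[OF iA0 c(2)] _ this]
        have "0\<^sub>v n \<le> iA\<^sup>T *\<^sub>v (- (A\<^sup>T *\<^sub>v cc))" by simp
        also have "iA\<^sup>T *\<^sub>v (- (A\<^sup>T *\<^sub>v cc)) = - cc"
          using mult_mat_vec_uminus[of "iA\<^sup>T" n n "A\<^sup>T *\<^sub>v cc"] assoc_mult_mat_vec[of "iA\<^sup>T" n n "A\<^sup>T" n cc] inv1 ccc c by simp
        finally have "0\<^sub>v n \<le> - cc" .
        with cc0 ccc show ?thesis unfolding less_eq_vec_def by (intro eq_vecI, force+)
      qed
      have "al = P\<^sup>T *\<^sub>v cc"
        unfolding cc_def using assoc_mult_mat_vec[of "P\<^sup>T" n n "iP\<^sup>T" n al] inv2 al(1) c by simp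
      also have "\<dots> = 0\<^sub>v n" unfolding ccz by (intro eq_vecI, auto simp: scalar_prod_def)
      finally show False using al(3) by simp
    qed
  qed
qed

theorem corollary3p9:
  fixes n :: nat and A iA P1 R1 S1 iP1 P2 R2 S2 iP2 iAh :: "real mat"
  assumes "n > 0"
    and "monotone_with_inv n A iA"
    and "double_weak_regular_splitting n A P1 R1 S1 iP1"
    and "double_regular_splitting n A P2 R2 S2 iP2"
    and "1 \<notin> spectrum (S2 * iP1)"
    and "is_inv n ((1\<^sub>m n - S2 * iP1) * A) iAh" and "iAh \<ge> 0\<^sub>m n n"
    and "iP1 \<le> iP2" and "iP1 * R1 \<le> iP2 * R2"
  shows "rho (four_block_mat (iP2 * R2 - iP2 * S2 * iP1 * R1) (iP2 * S2 * iP1 * S1) (1\<^sub>m n) (0\<^sub>m n n))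
           \<le> rho (four_block_mat (iP1 * R1) (- (iP1 * S1)) (1\<^sub>m n) (0\<^sub>m n n))
       \<and> rho (four_block_mat (iP1 * R1) (- (iP1 * S1)) (1\<^sub>m n) (0\<^sub>m n n)) < 1"
proof -
  note n = assms(1)
  from assms(2) have A: "A \<in> carrier_mat n n" and iA: "iA \<in> carrier_mat n n"
    and AiA: "A * iA = 1\<^sub>m n" "iA * A = 1\<^sub>m n" and iA0: "0\<^sub>m n n \<le> iA"
    unfolding monotone_with_inv_def is_inv_def by auto
  from assms(3) have R1: "R1 \<in> carrier_mat n n" and S1: "S1 \<in> carrier_mat n n"
    and P1: "P1 \<in> carrier_mat n n" and iP1: "iP1 \<in> carrier_mat n n"
    and P1i: "P1 * iP1 = 1\<^sub>m n" "iP1 * P1 = 1\<^sub>m n" and A1: "A = P1 - R1 + S1"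
    and iP10: "0\<^sub>m n n \<le> iP1" and H10: "0\<^sub>m n n \<le> iP1 * R1" and S1n: "iP1 * S1 \<le> 0\<^sub>m n n"
    unfolding double_weak_regular_splitting_def double_splitting_def is_inv_def by auto
  from assms(4) have R2: "R2 \<in> carrier_mat n n" and S2: "S2 \<in> carrier_mat n n"
    and P2: "P2 \<in> carrier_mat n n" and iP2: "iP2 \<in> carrier_mat n n"
    and P2i: "P2 * iP2 = 1\<^sub>m n" "iP2 * P2 = 1\<^sub>m n" and A2: "A = P2 - R2 + S2"
    and iP20: "0\<^sub>m n n \<le> iP2" and R20: "0\<^sub>m n n \<le> R2" and S20: "S2 \<le> 0\<^sub>m n n"
    unfolding double_regular_splitting_def double_splitting_def is_inv_def by auto
  define H1 where "H1 = iP1 * R1"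
  define K1 where "K1 = - (iP1 * S1)"
  have H1c: "H1 \<in> carrier_mat n n" and K1c: "K1 \<in> carrier_mat n n" unfolding H1_def K1_def using iP1 R1 S1 by auto
  have K10: "0\<^sub>m n n \<le> K1" using S1n iP1 S1 unfolding K1_def less_eq_mat_def by auto
  have iP1A: "iP1 * A = iP1 * P1 - iP1 * R1 + iP1 * S1"
  proof -
    have "iP1 * (P1 - R1 + S1) = iP1 * (P1 - R1) + iP1 * S1"
      by (rule mult_add_distrib_mat[of _ n n], insert iP1 P1 R1 S1, auto)
    also have "iP1 * (P1 - R1) = iP1 * P1 - iP1 * R1"
      by (rule mult_minus_distrib_mat[of _ n n], insert iP1 P1 R1, auto)
    finally show ?thesis unfolding A1 .
  qed
  have GK1: "H1 + K1 = 1\<^sub>m n - iP1 * A"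
    unfolding iP1A P1i(2) H1_def K1_def by (rule eq_matI, insert iP1 R1 S1, auto)
  interpret setting n A iA iP1 H1 K1 P2 iP2 R2 S2
    by (unfold_locales, insert n A iA iP1 H1c K1c P2 iP2 R2 S2 AiA iA0 P2i iP20 A2 R20 S20 GK1 H10 K10 assms(8,9),
        auto simp: H1_def)
  have T1: "four_block_mat (iP1 * R1) (- (iP1 * S1)) (1\<^sub>m n) (0\<^sub>m n n) = fb n H1 K1"
    unfolding H1_def K1_def ..
  have W: "four_block_mat (iP2 * R2 - iP2 * S2 * iP1 * R1) (iP2 * S2 * iP1 * S1) (1\<^sub>m n) (0\<^sub>m n n) = fb n Hw Kw"
  proof -
    have "Hw = iP2 * R2 + - (iP2 * S2) * (iP1 * R1)" unfolding Hw_def H2_def K2_def unfolding H1_def ..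
    also have "- (iP2 * S2) * (iP1 * R1) = - (iP2 * S2 * iP1 * R1)"
      using iP2 S2 iP1 R1 by (simp add: uminus_mult_left_mat assoc_mult_mat[of _ n n _ n _ n])
    also have "iP2 * R2 + - (iP2 * S2 * iP1 * R1) = iP2 * R2 - iP2 * S2 * iP1 * R1"
      by (rule minus_add_uminus_mat[symmetric], insert iP2 R2 S2 iP1 R1, auto)
    finally have 1: "Hw = iP2 * R2 - iP2 * S2 * iP1 * R1" .
    have "Kw = - (iP2 * S2) * - (iP1 * S1)" unfolding Kw_def K2_def unfolding K1_def ..
    also have "\<dots> = iP2 * S2 * (iP1 * S1)" using iP2 S2 iP1 S1 by (simp add: uminus_mult_left_mat uminus_mult_right_mat)
    also have "\<dots> = iP2 * S2 * iP1 * S1" using iP2 S2 iP1 S1 by (simp add: assoc_mult_mat[of _ n n _ n _ n])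
    finally have 2: "Kw = iP2 * S2 * iP1 * S1" .
    show ?thesis unfolding 1 2 ..
  qed
  have lt1: "rho (fb n H1 K1) < 1"
  proof -
    show ?thesis by (rule wr_rho_lt1[OF n A iA P1 iP1 H1c K1c AiA(1) iA0 P1i(2) iP10 H10 K10 GK1])
  qed
  have le1: "rho (fb n H2 K2) \<le> rho (fb n H1 K1)" by (rule rho_T2_le_T1)
  have le2: "rho (fb n Hw Kw) \<le> rho (fb n H2 K2)" by (rule rho_W_le_T2, insert le1 lt1 iP10, auto)
  show ?thesis unfolding T1 W using le1 le2 lt1 by auto
qed

end
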